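(* Let $\Omega\subseteq\mathbb{R}^N$ be open and bounded, let $\eta$ and $T$ be as in the context (with zero set of $\eta$ equal to $\partial\Omega$), and let $f\in BV_{loc}(\Omega)$ with distributional derivative $Df$ (an $\mathbb{R}^N$-valued locally finite Radon measure). Then $Tf\in C^\infty(\Omega)$ and, writing gradients as row vectors, for every $x\in\Omega$ $$\nabla Tf(x)=C(x)\int_\Omega\rho\Big(\frac{x-y}{\eta(x)}\Big)\,dDf(y)+C(x)\frac{\nabla\eta(x)}{\eta(x)}\int_\Omega\rho\Big(\frac{x-y}{\eta(x)}\Big)(y-x)\cdot dDf(y),$$ where $C(x)=M_\rho/\eta(x)^N$.
   Context: $\rho\in C_c^\infty(\mathbb{R}^N)$ satisfies $0\le\rho\le1$, $\rho(x)=0$ iff $|x|\ge1$, $\rho$ is radially symmetric, and $\rho(x)\ge\rho(1/2)$ for all $|x|<1/2$. Set $M_\rho:=(\int_{B_1(0)}\rho(y)\,dy)^{-1}$. Let $\eta\in C^\infty(\mathbb{R}^N)$ be non-negative with $\eta^{-1}(\{0\})=\partial\Omega$, all derivatives of $\eta$ vanishing on $\partial\Omega$, and $\eta(x)<\mathrm{dist}(x,\partial\Omega)$ for every $x\notin\partial\Omega$. For $f\in L^1_{loc}(\Omega)$ and $x\in\Omega$ define $Tf(x):=C(x)\int_\Omega\rho\big(\frac{x-y}{\eta(x)}\big)f(y)\,dy$ with $C(x):=M_\rho/\eta(x)^N$ (equivalently $Tf(x)=M_\rho\int_{B_1(0)}\rho(z)f(x-\eta(x)z)\,dz$). *)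

theory Defs
  imports "HOL-Analysis.Analysis"
begin

text \<open>Iterated partial derivatives along a list of directions (innermost derivative = last list element).\<close>
fun iter_partial :: "'a::euclidean_space list \<Rightarrow> ('a \<Rightarrow> real) \<Rightarrow> 'a \<Rightarrow> real" where
  "iter_partial [] g = g"
| "iter_partial (v # vs) g = (\<lambda>x. frechet_derivative (iter_partial vs g) (at x) v)"

definition smooth_on :: "'a::euclidean_space set \<Rightarrow> ('a \<Rightarrow> real) \<Rightarrow> bool" where
  "smooth_on S g \<longleftrightarrow> (\<forall>vs \<in> lists Basis. iter_partial vs g differentiable_on S)"

definition gradient :: "('a::euclidean_space \<Rightarrow> real) \<Rightarrow> 'a \<Rightarrow> 'a" where
  "gradient g x = (\<Sum>i\<in>Basis. frechet_derivative g (at x) i *\<^sub>R i)"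

definition mollifier :: "('a::euclidean_space \<Rightarrow> real) \<Rightarrow> bool" where
  "mollifier \<rho> \<longleftrightarrow> smooth_on UNIV \<rho>
     \<and> (\<forall>x. 0 \<le> \<rho> x \<and> \<rho> x \<le> 1)
     \<and> (\<forall>x. \<rho> x = 0 \<longleftrightarrow> norm x \<ge> 1)
     \<and> (\<forall>x y. norm x = norm y \<longrightarrow> \<rho> x = \<rho> y)
     \<and> (\<forall>x y. norm x < 1/2 \<longrightarrow> norm y = 1/2 \<longrightarrow> \<rho> x \<ge> \<rho> y)"

definition M_rho :: "('a::euclidean_space \<Rightarrow> real) \<Rightarrow> real" where
  "M_rho \<rho> = inverse (LINT y:ball 0 1|lebesgue. \<rho> y)"

definition reg_dist :: "'a::euclidean_space set \<Rightarrow> ('a \<Rightarrow> real) \<Rightarrow> bool" where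
  "reg_dist \<Omega> \<eta> \<longleftrightarrow> smooth_on UNIV \<eta>
     \<and> (\<forall>x. 0 \<le> \<eta> x)
     \<and> {x. \<eta> x = 0} = frontier \<Omega>
     \<and> (\<forall>vs \<in> lists Basis. \<forall>x \<in> frontier \<Omega>. iter_partial vs \<eta> x = 0)
     \<and> (\<forall>x. x \<notin> frontier \<Omega> \<longrightarrow> \<eta> x < infdist x (frontier \<Omega>))"

definition C_coef :: "('a::euclidean_space \<Rightarrow> real) \<Rightarrow> ('a \<Rightarrow> real) \<Rightarrow> 'a \<Rightarrow> real" where
  "C_coef \<rho> \<eta> x = M_rho \<rho> / \<eta> x ^ DIM('a)"

definition T_op :: "'a::euclidean_space set \<Rightarrow> ('a \<Rightarrow> real) \<Rightarrow> ('a \<Rightarrow> real) \<Rightarrow> ('a \<Rightarrow> real) \<Rightarrow> 'a \<Rightarrow> real" where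
  "T_op \<Omega> \<rho> \<eta> f x = C_coef \<rho> \<eta> x * (LINT y:\<Omega>|lebesgue. \<rho> ((1 / \<eta> x) *\<^sub>R (x - y)) * f y)"

definition test_fun :: "'a::euclidean_space set \<Rightarrow> ('a \<Rightarrow> real) \<Rightarrow> bool" where
  "test_fun \<Omega> \<phi> \<longleftrightarrow> smooth_on UNIV \<phi> \<and> compact (closure {x. \<phi> x \<noteq> 0})
     \<and> closure {x. \<phi> x \<noteq> 0} \<subseteq> \<Omega>"

text \<open>f in BV_loc(Omega) with distributional derivative Df = \<sigma> \<mu> (polar decomposition):
  \<mu> a locally finite (hence Radon) Borel measure on Omega (= |Df|), \<sigma> a Borel unit vector field.\<close>
definition BV_loc_with_deriv ::
  "'a::euclidean_space set \<Rightarrow> ('a \<Rightarrow> real) \<Rightarrow> 'a measure \<Rightarrow> ('a \<Rightarrow> 'a) \<Rightarrow> bool" where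
  "BV_loc_with_deriv \<Omega> f \<mu> \<sigma> \<longleftrightarrow>
     (\<forall>K. compact K \<and> K \<subseteq> \<Omega> \<longrightarrow> set_integrable lebesgue K f)
     \<and> sets \<mu> = sets borel
     \<and> (\<forall>K. compact K \<and> K \<subseteq> \<Omega> \<longrightarrow> emeasure \<mu> K < \<infinity>)
     \<and> \<sigma> \<in> borel_measurable borel
     \<and> (\<forall>y\<in>\<Omega>. norm (\<sigma> y) = 1)
     \<and> (\<forall>\<phi> i. test_fun \<Omega> \<phi> \<and> i \<in> Basis \<longrightarrow>
          (LINT x:\<Omega>|lebesgue. f x * frechet_derivative \<phi> (at x) i)
          = - (LINT y:\<Omega>|\<mu>. \<phi> y * (\<sigma> y \<bullet> i)))"

end

theory Submission
  imports Defs
begin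


definition pd :: "('a::euclidean_space \<Rightarrow> real) \<Rightarrow> 'a \<Rightarrow> 'a \<Rightarrow> real" where
  "pd g v = (\<lambda>x. frechet_derivative g (at x) v)"

lemma iter_partial_snoc:
  "iter_partial (vs @ [v]) g = iter_partial vs (pd g v)"
  by (induction vs) (auto simp: pd_def)

lemma frechet_derivative_cong_open:
  assumes "open S" "x \<in> S" "\<And>y. y \<in> S \<Longrightarrow> f y = g y"
  shows "frechet_derivative f (at x) = frechet_derivative g (at x)"
proof -
  have "(\<lambda>D. (f has_derivative D) (at x)) = (\<lambda>D. (g has_derivative D) (at x))"
  proof (rule ext, rule iffI)
    fix D assume "(f has_derivative D) (at x)"
    then show "(g has_derivative D) (at x)"
      using has_derivative_transform_within_open assms by blast
  next
    fix D assume "(g has_derivative D) (at x)"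
    then show "(f has_derivative D) (at x)"
      using has_derivative_transform_within_open[of g D x UNIV S f] assms by auto
  qed
  then show ?thesis unfolding frechet_derivative_def by simp
qed

lemma iter_partial_cong:
  assumes "open S" "\<forall>y\<in>S. f y = g y"
  shows "x \<in> S \<Longrightarrow> iter_partial vs f x = iter_partial vs g x"
proof (induction vs arbitrary: x)
  case Nil
  then show ?case using assms by simp
next
  case (Cons v vs)
  have "frechet_derivative (iter_partial vs f) (at x) = frechet_derivative (iter_partial vs g) (at x)"
    by (rule frechet_derivative_cong_open[OF assms(1) Cons.prems]) (use Cons.IH in auto)
  then show ?case by simp
qed

definition Ck :: "nat \<Rightarrow> 'a::euclidean_space set \<Rightarrow> ('a \<Rightarrow> real) \<Rightarrow> bool" where
  "Ck n S g \<longleftrightarrow> (\<forall>vs \<in> lists Basis. length vs \<le> n \<longrightarrow> iter_partial vs g differentiable_on S)"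

lemma smooth_on_Ck: "smooth_on S g \<longleftrightarrow> (\<forall>n. Ck n S g)"
  unfolding smooth_on_def Ck_def by auto

lemma Ck_0: "Ck 0 S g \<longleftrightarrow> g differentiable_on S"
  unfolding Ck_def by auto

lemma Ck_Suc: "Ck (Suc n) S g \<longleftrightarrow> g differentiable_on S \<and> (\<forall>i\<in>Basis. Ck n S (pd g i))"
proof
  assume H: "Ck (Suc n) S g"
  show "g differentiable_on S \<and> (\<forall>i\<in>Basis. Ck n S (pd g i))"
  proof
    show "g differentiable_on S" using H unfolding Ck_def
      by (metis iter_partial.simps(1) le0 list.size(3) lists.Nil)
    show "\<forall>i\<in>Basis. Ck n S (pd g i)"
    proof (intro ballI)
      fix i :: 'a assume i: "i \<in> Basis"
      show "Ck n S (pd g i)" unfolding Ck_def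
      proof (intro ballI impI)
        fix vs :: "'a list" assume "vs \<in> lists Basis" "length vs \<le> n"
        then have "vs @ [i] \<in> lists Basis" "length (vs @ [i]) \<le> Suc n" using i by auto
        then have "iter_partial (vs @ [i]) g differentiable_on S"
          using H unfolding Ck_def by blast
        then show "iter_partial vs (pd g i) differentiable_on S"
          by (simp add: iter_partial_snoc)
      qed
    qed
  qed
next
  assume H: "g differentiable_on S \<and> (\<forall>i\<in>Basis. Ck n S (pd g i))"
  show "Ck (Suc n) S g" unfolding Ck_def
  proof (intro ballI impI)
    fix vs :: "'a list" assume vs: "vs \<in> lists Basis" "length vs \<le> Suc n"
    show "iter_partial vs g differentiable_on S"
    proof (cases vs rule: rev_cases)
      case Nil
      then show ?thesis using H by simp
    next
      case (snoc ws v)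
      then have "ws \<in> lists Basis" "v \<in> Basis" "length ws \<le> n" using vs by auto
      then have "iter_partial ws (pd g v) differentiable_on S" using H unfolding Ck_def by blast
      then show ?thesis unfolding snoc iter_partial_snoc .
    qed
  qed
qed

lemma Ck_mono: "Ck n S g \<Longrightarrow> m \<le> n \<Longrightarrow> Ck m S g"
  unfolding Ck_def by auto

lemma Ck_diff: "Ck n S g \<Longrightarrow> g differentiable_on S"
  using Ck_mono Ck_0 by blast

lemma Ck_cong:
  assumes "open S" "\<And>y. y \<in> S \<Longrightarrow> f y = g y" "Ck n S f"
  shows "Ck n S g"
  unfolding Ck_def
proof (intro ballI impI)
  fix vs :: "'a list" assume vs: "vs \<in> lists Basis" "length vs \<le> n"
  have d: "iter_partial vs f differentiable_on S" using assms(3) vs unfolding Ck_def by blast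
  have e: "\<And>y. y \<in> S \<Longrightarrow> iter_partial vs f y = iter_partial vs g y"
    using iter_partial_cong[of S f g] assms(1,2) by blast
  show "iter_partial vs g differentiable_on S"
    unfolding differentiable_on_eq_differentiable_at[OF assms(1)]
  proof
    fix x assume x: "x \<in> S"
    then obtain D where "(iter_partial vs f has_derivative D) (at x)"
      using d unfolding differentiable_on_eq_differentiable_at[OF assms(1)] differentiable_def by blast
    then have "(iter_partial vs g has_derivative D) (at x)"
      using has_derivative_transform_within_open[of "iter_partial vs f" D x UNIV S "iter_partial vs g"] assms(1) x e by blast
    then show "iter_partial vs g differentiable at x" unfolding differentiable_def by blast
  qed
qed

lemma smooth_Ck_cong:
  assumes "open S" "\<And>y. y \<in> S \<Longrightarrow> f y = g y" "smooth_on S f"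
  shows "smooth_on S g"
  using Ck_cong assms unfolding smooth_on_Ck by blast

lemma pd_has_derivative:
  assumes "(g has_derivative D) (at x)"
  shows "pd g v x = D v"
  using frechet_derivative_at[OF assms] unfolding pd_def by simp

lemma Ck_const: "Ck n S (\<lambda>x. c)"
proof (induction n arbitrary: c)
  case 0
  then show ?case unfolding Ck_0 by simp
next
  case (Suc n)
  have "pd (\<lambda>x. c) i = (\<lambda>x. 0)" for i :: 'a
    by (rule ext, rule pd_has_derivative[where D="\<lambda>h. 0", simplified]) (rule has_derivative_const)
  then show ?case unfolding Ck_Suc using Suc by simp
qed

lemma Ck_add:
  assumes "open S" shows "Ck n S f \<Longrightarrow> Ck n S g \<Longrightarrow> Ck n S (\<lambda>x. f x + g x)"
proof (induction n arbitrary: f g)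
  case 0
  then show ?case unfolding Ck_0 by (simp add: differentiable_on_add)
next
  case (Suc n)
  have df: "f differentiable_on S" and dg: "g differentiable_on S" using Suc.prems Ck_Suc by blast+
  have "Ck n S (pd (\<lambda>x. f x + g x) i)" if i: "i \<in> Basis" for i
  proof (rule Ck_cong[OF assms])
    show "Ck n S (\<lambda>x. pd f i x + pd g i x)" using Suc i unfolding Ck_Suc by blast
    fix y assume y: "y \<in> S"
    have "f differentiable at y" "g differentiable at y"
      using df dg y differentiable_on_eq_differentiable_at[OF assms] by blast+
    then have "((\<lambda>x. f x + g x) has_derivative (\<lambda>h. frechet_derivative f (at y) h + frechet_derivative g (at y) h)) (at y)"
      by (intro has_derivative_add) (auto simp: frechet_derivative_works)
    from pd_has_derivative[OF this, of i]
    show "pd f i y + pd g i y = pd (\<lambda>x. f x + g x) i y"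
      by (simp add: pd_def)
  qed
  then show ?case unfolding Ck_Suc using df dg by (simp add: differentiable_on_add)
qed

lemma Ck_mult:
  assumes "open S" shows "Ck n S f \<Longrightarrow> Ck n S g \<Longrightarrow> Ck n S (\<lambda>x. f x * g x)"
proof (induction n arbitrary: f g)
  case 0
  then show ?case unfolding Ck_0 by (simp add: differentiable_on_mult)
next
  case (Suc n)
  have df: "f differentiable_on S" and dg: "g differentiable_on S" using Suc.prems Ck_Suc by blast+
  have "Ck n S (pd (\<lambda>x. f x * g x) i)" if i: "i \<in> Basis" for i
  proof (rule Ck_cong[OF assms])
    have f: "Ck n S f" and g: "Ck n S g" using Suc.prems Ck_mono[of "Suc n" S _ n] by auto
    have pf: "Ck n S (pd f i)" and pg: "Ck n S (pd g i)" using Suc.prems i unfolding Ck_Suc by auto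
    show "Ck n S (\<lambda>x. pd f i x * g x + f x * pd g i x)" 
      by (rule Ck_add[OF assms Suc.IH[OF pf g] Suc.IH[OF f pg]])
    fix y assume y: "y \<in> S"
    have "f differentiable at y" "g differentiable at y"
      using df dg y differentiable_on_eq_differentiable_at[OF assms] by blast+
    then have "((\<lambda>x. f x * g x) has_derivative (\<lambda>h. f y * frechet_derivative g (at y) h + frechet_derivative f (at y) h * g y)) (at y)"
      by (intro has_derivative_mult) (auto simp: frechet_derivative_works)
    from pd_has_derivative[OF this, of i]
    show "pd f i y * g y + f y * pd g i y = pd (\<lambda>x. f x * g x) i y"
      by (simp add: pd_def)
  qed
  then show ?case unfolding Ck_Suc using df dg by (simp add: differentiable_on_mult)
qed

lemma Ck_sum:
  assumes "open S" "finite A" shows "(\<And>a. a \<in> A \<Longrightarrow> Ck n S (f a)) \<Longrightarrow> Ck n S (\<lambda>x. \<Sum>a\<in>A. f a x)"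
  using assms(2)
proof (induction A rule: finite_induct)
  case empty
  then show ?case using Ck_const by simp
next
  case (insert a A)
  then show ?case using Ck_add[OF assms(1), of n "f a" "\<lambda>x. \<Sum>a\<in>A. f a x"] by simp
qed



lemma Ck_linear:
  assumes "bounded_linear L" shows "Ck n S L"
proof (cases n)
  case 0
  have "L differentiable_on S" using assms
    by (meson bounded_linear_imp_differentiable differentiable_at_imp_differentiable_on)
  then show ?thesis unfolding 0 Ck_0 .
next
  case (Suc m)
  have e: "pd L i = (\<lambda>x. L i)" for i
    by (rule ext, rule pd_has_derivative, rule bounded_linear_imp_has_derivative[OF assms])
  have "L differentiable_on S" using assms
    by (meson bounded_linear_imp_differentiable differentiable_at_imp_differentiable_on)
  then show ?thesis unfolding Suc Ck_Suc e using Ck_const by blast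
qed

lemma Ck_compose:
  fixes \<rho> :: "'b::euclidean_space \<Rightarrow> real" and G :: "'c::euclidean_space \<Rightarrow> 'b"
  assumes S: "open S" and W: "open W" and GS: "G ` S \<subseteq> W"
  shows "Ck n W \<rho> \<Longrightarrow> (\<forall>j\<in>Basis. Ck n S (\<lambda>x. G x \<bullet> j)) \<Longrightarrow> Ck n S (\<lambda>x. \<rho> (G x))"
proof (induction n arbitrary: \<rho>)
  case 0
  show ?case unfolding Ck_0 differentiable_on_eq_differentiable_at[OF S]
  proof
    fix x assume x: "x \<in> S"
    have "G differentiable at x"
      using 0 x unfolding Ck_0 differentiable_on_eq_differentiable_at[OF S]
      using differentiable_componentwise_within[of G x UNIV] by auto
    moreover have "\<rho> differentiable at (G x)"
      using 0 x GS unfolding Ck_0 differentiable_on_eq_differentiable_at[OF W] by auto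
    ultimately show "(\<lambda>x. \<rho> (G x)) differentiable at x"
      using differentiable_chain_at[of G x \<rho>] by (simp add: o_def)
  qed
next
  case (Suc n)
  have Gd: "G differentiable at x" if x: "x \<in> S" for x
  proof -
    have "(\<lambda>x. G x \<bullet> j) differentiable at x" if j: "j \<in> Basis" for j
    proof -
      have "(\<lambda>x. G x \<bullet> j) differentiable_on S" using Ck_diff Suc.prems(2) j by blast
      then show ?thesis using differentiable_on_eq_differentiable_at[OF S] x by blast
    qed
    then show ?thesis using differentiable_componentwise_within[of G x UNIV] by blast
  qed
  have rd: "\<rho> differentiable at (G x)" if x: "x \<in> S" for x
  proof -
    have "\<rho> differentiable_on W" using Ck_diff Suc.prems(1) by blast
    then show ?thesis using differentiable_on_eq_differentiable_at[OF W] x GS by blast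
  qed
  have comp_d: "(\<lambda>x. \<rho> (G x)) differentiable_on S"
    unfolding differentiable_on_eq_differentiable_at[OF S]
    using differentiable_chain_at[of G _ \<rho>] Gd rd by (simp add: o_def)
  have eq: "pd (\<lambda>x. \<rho> (G x)) i y = (\<Sum>j\<in>Basis. pd \<rho> j (G y) * pd (\<lambda>x. G x \<bullet> j) i y)"
    if y: "y \<in> S" for i y
  proof -
    define D\<rho> where "D\<rho> = frechet_derivative \<rho> (at (G y))"
    define DG where "DG = frechet_derivative G (at y)"
    have hG: "(G has_derivative DG) (at y)" using Gd[OF y] frechet_derivative_works DG_def by blast
    have hr: "(\<rho> has_derivative D\<rho>) (at (G y))" using rd[OF y] frechet_derivative_works D\<rho>_def by blast
    have "((\<lambda>x. \<rho> (G x)) has_derivative (\<lambda>h. D\<rho> (DG h))) (at y)"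
      using diff_chain_at[OF hG hr] by (simp add: o_def)
    then have 1: "pd (\<lambda>x. \<rho> (G x)) i y = D\<rho> (DG i)" by (rule pd_has_derivative)
    have 2: "pd \<rho> j (G y) = D\<rho> j" for j unfolding pd_def D\<rho>_def by simp
    have "((\<lambda>x. G x \<bullet> j) has_derivative (\<lambda>h. DG h \<bullet> j)) (at y)" for j
      using has_derivative_inner_left[OF hG] .
    then have 3: "pd (\<lambda>x. G x \<bullet> j) i y = DG i \<bullet> j" for j by (rule pd_has_derivative)
    have lin: "linear D\<rho>" using hr has_derivative_linear by blast
    have "D\<rho> (DG i) = D\<rho> (\<Sum>j\<in>Basis. (DG i \<bullet> j) *\<^sub>R j)" by (simp add: euclidean_representation)
    also have "\<dots> = (\<Sum>j\<in>Basis. (DG i \<bullet> j) * D\<rho> j)"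
      using lin by (simp add: linear_sum linear_scale)
    finally show ?thesis unfolding 1 2 3 by (simp add: mult.commute)
  qed
  have "Ck n S (pd (\<lambda>x. \<rho> (G x)) i)" if i: "i \<in> Basis" for i
  proof (rule Ck_cong[OF S])
    show "y \<in> S \<Longrightarrow> (\<Sum>j\<in>Basis. pd \<rho> j (G y) * pd (\<lambda>x. G x \<bullet> j) i y) = pd (\<lambda>x. \<rho> (G x)) i y" for y
      using eq by simp
    have Gn: "\<forall>j\<in>Basis. Ck n S (\<lambda>x. G x \<bullet> j)" using Suc.prems(2) Ck_mono[of "Suc n" S _ n] by auto
    show "Ck n S (\<lambda>y. \<Sum>j\<in>Basis. pd \<rho> j (G y) * pd (\<lambda>x. G x \<bullet> j) i y)"
    proof (rule Ck_sum[OF S finite_Basis])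
      fix j :: 'b assume j: "j \<in> Basis"
      have "Ck n W (pd \<rho> j)" using Suc.prems(1) j unfolding Ck_Suc by blast
      then have a: "Ck n S (\<lambda>y. pd \<rho> j (G y))" using Suc.IH Gn by blast
      have b: "Ck n S (pd (\<lambda>x. G x \<bullet> j) i)" using Suc.prems(2) i j unfolding Ck_Suc by blast
      show "Ck n S (\<lambda>y. pd \<rho> j (G y) * pd (\<lambda>x. G x \<bullet> j) i y)"
        by (rule Ck_mult[OF S a b])
    qed
  qed
  then show ?case unfolding Ck_Suc using comp_d by blast
qed



lemma Ck_subset: "Ck n T g \<Longrightarrow> S \<subseteq> T \<Longrightarrow> Ck n S g"
  unfolding Ck_def using differentiable_on_subset by blast

lemma Ck_inverse_real: "Ck n {0<..} (\<lambda>t::real. inverse t)"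
proof (induction n)
  case 0
  have "(\<lambda>t::real. inverse t) differentiable at t" if "t \<in> {0<..}" for t
    using has_derivative_inverse'[of t UNIV] that unfolding differentiable_def by auto
  then show ?case unfolding Ck_0 differentiable_on_eq_differentiable_at[OF open_greaterThan] by blast
next
  case (Suc n)
  have d: "(\<lambda>t::real. inverse t) differentiable_on {0<..}"
    using Suc Ck_diff by blast
  have "Ck n {0<..} (pd (\<lambda>t::real. inverse t) i)" if "i \<in> Basis" for i
  proof -
    have i: "i = 1" using that by simp
    show ?thesis
    proof (rule Ck_cong[OF open_greaterThan])
      show "Ck n {0<..} (\<lambda>t::real. (-1) * (inverse t * inverse t))"
        by (intro Ck_mult[OF open_greaterThan] Ck_const Suc.IH)
      fix t :: real assume "t \<in> {0<..}"
      then have "t \<noteq> 0" by simp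
      from pd_has_derivative[OF has_derivative_inverse'[OF this, of UNIV], of i]
      show "(-1) * (inverse t * inverse t) = pd (\<lambda>t. inverse t) i t" using i by simp
    qed
  qed
  then show ?case unfolding Ck_Suc using d by blast
qed

lemma Ck_inverse:
  assumes "open S" "Ck n S g" "\<And>x. x \<in> S \<Longrightarrow> g x > 0"
  shows "Ck n S (\<lambda>x. inverse (g x))"
proof (rule Ck_compose[OF assms(1) open_greaterThan, where G=g and \<rho>=inverse])
  show "g ` S \<subseteq> {0<..}" using assms(3) by auto
  show "Ck n {0<..} inverse" using Ck_inverse_real by (simp add: fun_eq_iff)
  show "\<forall>j\<in>Basis. Ck n S (\<lambda>x. g x \<bullet> j)" using assms(2) by simp
qed

lemma Ck_power:
  assumes "open S" "Ck n S g" shows "Ck n S (\<lambda>x. g x ^ k)"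
proof (induction k)
  case 0
  then show ?case using Ck_const by simp
next
  case (Suc k)
  then show ?case using Ck_mult[OF assms(1) assms(2) Suc] by simp
qed

lemma Ck_fst_comp:
  fixes \<eta> :: "'a::euclidean_space \<Rightarrow> real"
  assumes "open \<Omega>" "Ck n \<Omega> \<eta>"
  shows "Ck n (\<Omega> \<times> (UNIV::'b::euclidean_space set)) (\<lambda>p. \<eta> (fst p))"
proof (rule Ck_compose[OF open_Times[OF assms(1) open_UNIV] assms(1)])
  show "fst ` (\<Omega> \<times> (UNIV::'b set)) \<subseteq> \<Omega>" by auto
  show "Ck n \<Omega> \<eta>" by fact
  show "\<forall>j\<in>Basis. Ck n (\<Omega> \<times> UNIV) (\<lambda>p::'a\<times>'b. fst p \<bullet> j)"
    by (intro ballI Ck_linear bounded_linear_inner_left_comp bounded_linear_fst)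
qed


lemma compact_lebesgue: "compact (B::'a::euclidean_space set) \<Longrightarrow> B \<in> sets lebesgue"
  by (simp add: borel_compact)
lemma int_cont:
  fixes g f :: "'a::euclidean_space \<Rightarrow> real"
  assumes "continuous_on UNIV g" "compact B" "set_integrable lebesgue B f"
  shows "set_integrable lebesgue B (\<lambda>y. g y * f y)"
proof -
  have "(\<lambda>y. g y * f y) absolutely_integrable_on B"
  proof (rule absolutely_integrable_bounded_measurable_product[OF bilinear_times])
    show "g \<in> borel_measurable (lebesgue_on B)"
      using continuous_imp_measurable_on_sets_lebesgue[of B g] assms
      by (meson compact_lebesgue continuous_on_subset top_greatest)
    show "B \<in> sets lebesgue" using assms compact_lebesgue by blast
    show "bounded (g ` B)"
      using assms by (meson compact_continuous_image compact_imp_bounded continuous_on_subset top_greatest)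
    show "f absolutely_integrable_on B" using assms by simp
  qed
  then show ?thesis by simp
qed

lemma set_abs_bound:
  fixes g h :: "'a \<Rightarrow> real"
  assumes "set_integrable M A g" "set_integrable M A h" "\<And>x. x \<in> A \<Longrightarrow> \<bar>g x\<bar> \<le> h x"
  shows "\<bar>LINT x:A|M. g x\<bar> \<le> (LINT x:A|M. h x)"
proof -
  have 1: "(LINT x:A|M. g x) \<le> (LINT x:A|M. h x)"
    by (rule set_integral_mono[OF assms(1,2)]) (use assms(3) in force)
  have i: "set_integrable M A (\<lambda>x. (-1) * g x)" using assms(1) by (rule set_integrable_mult_right)
  have "(LINT x:A|M. (-1) * g x) \<le> (LINT x:A|M. h x)"
    by (rule set_integral_mono[OF i assms(2)]) (use assms(3) in force)
  then have 2: "- (LINT x:A|M. g x) \<le> (LINT x:A|M. h x)" using set_integral_mult_right[where a="-1" and M=M and A=A and f=g] by simp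
  show ?thesis using 1 2 by linarith
qed

lemma set_integral_sum_fin:
  fixes f :: "'i \<Rightarrow> 'a \<Rightarrow> real"
  assumes "finite I" "\<And>i. i \<in> I \<Longrightarrow> set_integrable M A (f i)"
  shows "set_integrable M A (\<lambda>x. \<Sum>i\<in>I. f i x) \<and> (LINT x:A|M. (\<Sum>i\<in>I. f i x)) = (\<Sum>i\<in>I. LINT x:A|M. f i x)"
  using assms
proof (induction I rule: finite_induct)
  case empty
  then show ?case by (simp add: set_integrable_def set_lebesgue_integral_def)
next
  case (insert a I)
  have ia: "set_integrable M A (f a)" using insert by simp
  have iI: "set_integrable M A (\<lambda>x. \<Sum>i\<in>I. f i x)" and eI: "(LINT x:A|M. (\<Sum>i\<in>I. f i x)) = (\<Sum>i\<in>I. LINT x:A|M. f i x)"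
    using insert by auto
  show ?case using set_integral_add[OF ia iI] eI insert(1,2) by simp
qed

lemma cont_slice:
  assumes "continuous_on (U \<times> UNIV) (\<lambda>p. P (fst p) (snd p))" "x \<in> U"
  shows "continuous_on UNIV (P x)"
proof -
  have "continuous_on UNIV (\<lambda>y. (\<lambda>p. P (fst p) (snd p)) (x, y))"
    by (rule continuous_on_compose2[OF assms(1)]) (use assms(2) in \<open>auto intro!: continuous_intros\<close>)
  then show ?thesis by simp
qed

lemma deriv_under_integral:
  fixes K :: "'a::euclidean_space \<Rightarrow> 'b::euclidean_space \<Rightarrow> real"
    and P :: "'a \<Rightarrow> 'a \<Rightarrow> 'b \<Rightarrow> real" and f :: "'b \<Rightarrow> real"
  assumes U: "open U" "x0 \<in> U" and B: "compact B" and fi: "set_integrable lebesgue B f"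
    and Kd: "\<And>x y. x \<in> U \<Longrightarrow> ((\<lambda>x. K x y) has_derivative (\<lambda>h. \<Sum>i\<in>Basis. (h \<bullet> i) * P i x y)) (at x)"
    and Pc: "\<And>i. i \<in> Basis \<Longrightarrow> continuous_on (U \<times> UNIV) (\<lambda>p. P i (fst p) (snd p))"
    and Kc: "\<And>x. x \<in> U \<Longrightarrow> continuous_on UNIV (K x)"
  shows "((\<lambda>x. LINT y:B|lebesgue. K x y * f y) has_derivative
           (\<lambda>h. \<Sum>i\<in>Basis. (h \<bullet> i) * (LINT y:B|lebesgue. P i x0 y * f y))) (at x0)"
proof -
  define J where "J i = (LINT y:B|lebesgue. P i x0 y * f y)" for i
  define T where "T x = (LINT y:B|lebesgue. K x y * f y)" for x
  define I where "I = (LINT y:B|lebesgue. \<bar>f y\<bar>)"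
  have I0: "I \<ge> 0" unfolding I_def set_lebesgue_integral_def by (intro Bochner_Integration.integral_nonneg) (auto simp: indicator_def)
  have intK: "set_integrable lebesgue B (\<lambda>y. K x y * f y)" if "x \<in> U" for x
    using int_cont[OF Kc[OF that] B fi] .
  have intP: "set_integrable lebesgue B (\<lambda>y. P i x0 y * f y)" if "i \<in> Basis" for i
    using int_cont[OF cont_slice[OF Pc[OF that] U(2)] B fi] .
  have intPh: "set_integrable lebesgue B (\<lambda>y. c * (P i x0 y * f y))" if "i \<in> Basis" for i c
    using set_integrable_mult_right[OF intP[OF that]] .
  have bl: "bounded_linear (\<lambda>h. \<Sum>i\<in>Basis. (h \<bullet> i) * J i)"
  proof (rule bounded_linear_sum)
    fix i :: 'a
    have "(\<lambda>h. (h \<bullet> i) * J i) = (\<lambda>h. h \<bullet> (J i *\<^sub>R i))" by (simp add: fun_eq_iff)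
    then show "bounded_linear (\<lambda>h. (h \<bullet> i) * J i)" using bounded_linear_inner_left by metis
  qed
  have diff_eq: "T x - T x0 - (\<Sum>i\<in>Basis. ((x - x0) \<bullet> i) * J i)
      = (LINT y:B|lebesgue. (K x y * f y - K x0 y * f y) - (\<Sum>i\<in>Basis. ((x - x0) \<bullet> i) * (P i x0 y * f y)))"
    if x: "x \<in> U" for x
  proof -
    have s: "set_integrable lebesgue B (\<lambda>y. \<Sum>i\<in>Basis. ((x - x0) \<bullet> i) * (P i x0 y * f y))"
      and s2: "(LINT y:B|lebesgue. (\<Sum>i\<in>Basis. ((x - x0) \<bullet> i) * (P i x0 y * f y)))
             = (\<Sum>i\<in>Basis. LINT y:B|lebesgue. ((x - x0) \<bullet> i) * (P i x0 y * f y))"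
      using set_integral_sum_fin[of Basis lebesgue B "\<lambda>i y. ((x - x0) \<bullet> i) * (P i x0 y * f y)"] intPh
      by auto
    have d1: "set_integrable lebesgue B (\<lambda>y. K x y * f y - K x0 y * f y)"
      using set_integral_diff(1)[OF intK[OF x] intK[OF U(2)]] .
    show ?thesis
      unfolding set_integral_diff(2)[OF d1 s] s2 set_integral_diff(2)[OF intK[OF x] intK[OF U(2)]]
      by (simp add: T_def J_def)
  qed
  show ?thesis
    unfolding has_derivative_at_alt J_def[symmetric] T_def[symmetric]
  proof (intro conjI allI impI bl)
    fix e :: real assume e: "e > 0"
    define e' where "e' = e / (real DIM('a) * (I + 1))"
    have e': "e' > 0" unfolding e'_def using e I0 by (simp add: DIM_positive)
    define Q where "Q p = (\<Sum>i\<in>Basis. P i (fst p) (snd p) *\<^sub>R i)" for p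
    obtain r where r: "r > 0" "cball x0 r \<subseteq> U" using U open_contains_cball by blast
    have "continuous_on (cball x0 r \<times> B) Q"
      unfolding Q_def
      by (intro continuous_intros continuous_on_subset[OF Pc]) (use r in auto)
    then have "uniformly_continuous_on (cball x0 r \<times> B) Q"
      by (intro compact_uniformly_continuous compact_Times compact_cball B)
    then obtain d where d: "d > 0" and dQ: "\<And>p p'. p \<in> cball x0 r \<times> B \<Longrightarrow> p' \<in> cball x0 r \<times> B \<Longrightarrow> dist p' p < d \<Longrightarrow> dist (Q p') (Q p) < e'"
      unfolding uniformly_continuous_on_def using e' by metis
    have Pclose: "\<bar>P i t y - P i x0 y\<bar> < e'" if "i \<in> Basis" "t \<in> ball x0 (min d r)" "y \<in> B" for i t y
    proof -
      have "dist (Q (t, y)) (Q (x0, y)) < e'"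
        using dQ[of "(x0, y)" "(t, y)"] that r d by (auto simp: dist_Pair_Pair dist_commute)
      moreover have "\<bar>(Q (t, y) - Q (x0, y)) \<bullet> i\<bar> \<le> norm (Q (t, y) - Q (x0, y))"
        using Basis_le_norm that(1) by blast
      moreover have "(Q (t, y) - Q (x0, y)) \<bullet> i = P i t y - P i x0 y"
        unfolding Q_def using that(1) by (simp add: inner_diff_left inner_sum_left_Basis)
      ultimately show ?thesis by (simp add: dist_norm)
    qed
    show "\<exists>d>0. \<forall>x. norm (x - x0) < d \<longrightarrow> norm (T x - T x0 - (\<Sum>i\<in>Basis. ((x - x0) \<bullet> i) * J i)) \<le> e * norm (x - x0)"
    proof (intro exI[of _ "min d r"] conjI allI impI)
      show "min d r > 0" using d r by simp
      fix x assume x: "norm (x - x0) < min d r"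
      then have xb: "x \<in> ball x0 (min d r)" by (simp add: dist_norm norm_minus_commute)
      have xU: "x \<in> U" using xb r by auto
      have ptw: "\<bar>(K x y * f y - K x0 y * f y) - (\<Sum>i\<in>Basis. ((x - x0) \<bullet> i) * (P i x0 y * f y))\<bar>
                  \<le> (real DIM('a) * e' * norm (x - x0)) * \<bar>f y\<bar>" if y: "y \<in> B" for y
      proof -
        define g where "g t = K t y - (\<Sum>i\<in>Basis. (t \<bullet> i) * P i x0 y)" for t
        have gd: "(g has_derivative (\<lambda>h. \<Sum>i\<in>Basis. (h \<bullet> i) * (P i t y - P i x0 y))) (at t within ball x0 (min d r))"
          if t: "t \<in> ball x0 (min d r)" for t
        proof -
          have tU: "t \<in> U" using t r by auto
          have hh: "(g has_derivative (\<lambda>h. (\<Sum>i\<in>Basis. (h \<bullet> i) * P i t y) - (\<Sum>i\<in>Basis. (h \<bullet> i) * P i x0 y))) (at t)"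
            unfolding g_def
            by (intro has_derivative_diff Kd[OF tU] has_derivative_sum has_derivative_mult_left has_derivative_inner_left has_derivative_ident)
          have eqq: "(\<lambda>h. (\<Sum>i\<in>Basis. (h \<bullet> i) * P i t y) - (\<Sum>i\<in>Basis. (h \<bullet> i) * P i x0 y))
             = (\<lambda>h. \<Sum>i\<in>Basis. (h \<bullet> i) * (P i t y - P i x0 y))"
            by (rule ext) (simp only: right_diff_distrib sum_subtractf)
          from hh have "(g has_derivative (\<lambda>h. \<Sum>i\<in>Basis. (h \<bullet> i) * (P i t y - P i x0 y))) (at t)"
            unfolding eqq .
          then show ?thesis by (rule has_derivative_at_withinI)
        qed
        have onb: "onorm (\<lambda>h. \<Sum>i\<in>Basis. (h \<bullet> i) * (P i t y - P i x0 y)) \<le> real DIM('a) * e'"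
          if t: "t \<in> ball x0 (min d r)" for t
        proof (rule onorm_le)
          fix h :: 'a
          have "norm (\<Sum>i\<in>Basis. (h \<bullet> i) * (P i t y - P i x0 y)) \<le> (\<Sum>i\<in>Basis. norm ((h \<bullet> i) * (P i t y - P i x0 y)))"
            by (rule norm_sum)
          also have "\<dots> \<le> (\<Sum>i\<in>(Basis::'a set). e' * norm h)"
          proof (rule sum_mono)
            fix i :: 'a assume i: "i \<in> Basis"
            have "\<bar>h \<bullet> i\<bar> \<le> norm h" using Basis_le_norm i by blast
            moreover have "\<bar>P i t y - P i x0 y\<bar> \<le> e'" using Pclose[OF i t y] by simp
            ultimately have "\<bar>h \<bullet> i\<bar> * \<bar>P i t y - P i x0 y\<bar> \<le> norm h * e'"
              by (intro mult_mono) auto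
            then show "norm ((h \<bullet> i) * (P i t y - P i x0 y)) \<le> e' * norm h"
              by (simp add: abs_mult mult.commute)
          qed
          also have "\<dots> = real DIM('a) * e' * norm h" by simp
          finally show "norm (\<Sum>i\<in>Basis. (h \<bullet> i) * (P i t y - P i x0 y)) \<le> real DIM('a) * e' * norm h" .
        qed
        have "norm (g x - g x0) \<le> real DIM('a) * e' * norm (x - x0)"
          by (rule differentiable_bound[OF convex_ball gd onb xb]) (use d r in auto)
        moreover have "g x - g x0 = K x y - K x0 y - (\<Sum>i\<in>Basis. ((x - x0) \<bullet> i) * P i x0 y)"
          unfolding g_def by (simp add: inner_diff_left left_diff_distrib sum_subtractf)
        ultimately have "\<bar>K x y - K x0 y - (\<Sum>i\<in>Basis. ((x - x0) \<bullet> i) * P i x0 y)\<bar> \<le> real DIM('a) * e' * norm (x - x0)"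
          by simp
        moreover have "(K x y * f y - K x0 y * f y) - (\<Sum>i\<in>Basis. ((x - x0) \<bullet> i) * (P i x0 y * f y))
             = (K x y - K x0 y - (\<Sum>i\<in>Basis. ((x - x0) \<bullet> i) * P i x0 y)) * f y"
        proof -
          have "(\<Sum>i\<in>Basis. ((x - x0) \<bullet> i) * (P i x0 y * f y)) = (\<Sum>i\<in>Basis. ((x - x0) \<bullet> i) * P i x0 y) * f y"
            by (simp add: sum_distrib_right mult.assoc)
          then show ?thesis by (simp add: left_diff_distrib)
        qed
        ultimately show ?thesis by (simp add: abs_mult mult_right_mono)
      qed
      have iL: "set_integrable lebesgue B (\<lambda>y. (K x y * f y - K x0 y * f y) - (\<Sum>i\<in>Basis. ((x - x0) \<bullet> i) * (P i x0 y * f y)))"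
      proof -
        have s: "set_integrable lebesgue B (\<lambda>y. \<Sum>i\<in>Basis. ((x - x0) \<bullet> i) * (P i x0 y * f y))"
          using set_integral_sum_fin[of Basis lebesgue B "\<lambda>i y. ((x - x0) \<bullet> i) * (P i x0 y * f y)"] intPh
          by auto
        show ?thesis by (intro set_integral_diff(1) intK xU U(2) s)
      qed
      have iR: "set_integrable lebesgue B (\<lambda>y. (real DIM('a) * e' * norm (x - x0)) * \<bar>f y\<bar>)"
        by (intro set_integrable_mult_right set_integrable_abs fi)
      have "norm (T x - T x0 - (\<Sum>i\<in>Basis. ((x - x0) \<bullet> i) * J i))
          \<le> (LINT y:B|lebesgue. (real DIM('a) * e' * norm (x - x0)) * \<bar>f y\<bar>)"
        unfolding diff_eq[OF xU] real_norm_def by (rule set_abs_bound[OF iL iR ptw])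
      also have "\<dots> = real DIM('a) * e' * norm (x - x0) * I" unfolding I_def by simp
      also have "\<dots> \<le> e * norm (x - x0)"
      proof -
        have D0: "real DIM('a) > 0" by (simp add: DIM_positive)
        have I1: "I + 1 > 0" using I0 by linarith
        have "e' = (e / (I + 1)) / real DIM('a)" unfolding e'_def by (simp add: divide_divide_eq_left mult.commute)
        then have "real DIM('a) * e' = e / (I + 1)" using D0 by simp
        then have "real DIM('a) * e' * I = e * (I / (I + 1))" by simp
        also have "\<dots> \<le> e"
        proof -
          have "e * I \<le> e * (I + 1)" using e by (simp add: distrib_left)
          then have "(e * I) / (I + 1) \<le> e" using pos_divide_le_eq[OF I1] by blast
          then show ?thesis by simp
        qed
        finally have "real DIM('a) * e' * I \<le> e" .
        then show ?thesis by (metis mult.commute mult.left_commute mult_right_mono norm_ge_zero)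
      qed
      finally show "norm (T x - T x0 - (\<Sum>i\<in>Basis. ((x - x0) \<bullet> i) * J i)) \<le> e * norm (x - x0)" .
    qed
  qed
qed


definition good :: "'a::euclidean_space set \<Rightarrow> 'a set \<Rightarrow> ('a \<times> 'a \<Rightarrow> real) \<Rightarrow> bool" where
  "good \<Omega> U \<Phi> \<longleftrightarrow> smooth_on (U \<times> UNIV) \<Phi> \<and>
     (\<forall>x0\<in>U. \<exists>V B. open V \<and> x0 \<in> V \<and> V \<subseteq> U \<and> compact B \<and> B \<subseteq> \<Omega> \<and> (\<forall>x\<in>V. \<forall>y. y \<notin> B \<longrightarrow> \<Phi> (x, y) = 0))"

definition TI :: "'a::euclidean_space set \<Rightarrow> ('a \<Rightarrow> real) \<Rightarrow> ('a \<times> 'a \<Rightarrow> real) \<Rightarrow> 'a \<Rightarrow> real" where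
  "TI \<Omega> f \<Phi> x = (LINT y:\<Omega>|lebesgue. \<Phi> (x, y) * f y)"

definition Phd :: "('a::euclidean_space \<times> 'a \<Rightarrow> real) \<Rightarrow> 'a \<Rightarrow> 'a \<times> 'a \<Rightarrow> real" where
  "Phd \<Phi> i = pd \<Phi> (i, 0)"

lemma sum_basis_inner:
  fixes i :: "'a::euclidean_space"
  assumes "i \<in> Basis" shows "(\<Sum>j\<in>Basis. (i \<bullet> j) * c j) = (c i :: real)"
proof -
  have "(\<Sum>j\<in>Basis. (i \<bullet> j) * c j) = (\<Sum>j\<in>Basis. if j = i then c j else 0)"
    by (rule sum.cong) (use assms in \<open>auto simp: inner_Basis\<close>)
  also have "\<dots> = c i" using assms by (simp add: sum.delta)
  finally show ?thesis .
qed

lemma smooth_pd: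
  assumes "smooth_on S g" "v \<in> Basis" shows "smooth_on S (pd g v)"
  unfolding smooth_on_Ck
proof
  fix n
  have "Ck (Suc n) S g" using assms(1) smooth_on_Ck by blast
  then show "Ck n S (pd g v)" using assms(2) unfolding Ck_Suc by blast
qed

lemma smooth_cont:
  assumes "smooth_on S g" shows "continuous_on S g"
proof -
  have "Ck 0 S g" using assms smooth_on_Ck by blast
  then show ?thesis unfolding Ck_0 using differentiable_imp_continuous_on by blast
qed

lemma slice_deriv:
  fixes \<Phi> :: "'a::euclidean_space \<times> 'b::euclidean_space \<Rightarrow> real"
  assumes "\<Phi> differentiable at (x, y)"
  shows "((\<lambda>x. \<Phi> (x, y)) has_derivative (\<lambda>h. \<Sum>i\<in>Basis. (h \<bullet> i) * pd \<Phi> (i, 0) (x, y))) (at x)"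
proof -
  define D where "D = frechet_derivative \<Phi> (at (x, y))"
  have hD: "(\<Phi> has_derivative D) (at (x, y))" using assms frechet_derivative_works D_def by blast
  have hp: "((\<lambda>x. (x, y)) has_derivative (\<lambda>h. (h, 0))) (at x)"
    by (intro has_derivative_Pair has_derivative_ident has_derivative_const)
  have c: "((\<lambda>x. \<Phi> (x, y)) has_derivative (\<lambda>h. D (h, 0))) (at x)"
    using diff_chain_at[OF hp, of \<Phi> D] hD by (simp add: o_def)
  define L where "L = (\<lambda>h. D (h, 0))"
  have lin: "linear L" using c has_derivative_linear unfolding L_def by blast
  have rep: "D (h, 0) = (\<Sum>i\<in>Basis. (h \<bullet> i) * D (i, 0))" for h
  proof -
    have "D (h, 0) = L (\<Sum>i\<in>Basis. (h \<bullet> i) *\<^sub>R i)" unfolding L_def by (simp add: euclidean_representation)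
    also have "\<dots> = (\<Sum>i\<in>Basis. L ((h \<bullet> i) *\<^sub>R i))" by (rule linear_sum[OF lin])
    also have "\<dots> = (\<Sum>i\<in>Basis. (h \<bullet> i) * L i)" using linear_scale[OF lin] by simp
    finally show ?thesis unfolding L_def .
  qed
  have pdeq: "pd \<Phi> (i, 0) (x, y) = D (i, 0)" for i unfolding pd_def D_def by simp
  have e: "(\<lambda>h. D (h, 0)) = (\<lambda>h. \<Sum>i\<in>Basis. (h \<bullet> i) * pd \<Phi> (i, 0) (x, y))"
  proof (rule ext)
    fix h show "D (h, 0) = (\<Sum>i\<in>Basis. (h \<bullet> i) * pd \<Phi> (i, 0) (x, y))"
      unfolding pdeq by (rule rep)
  qed
  show ?thesis using c[unfolded e] .
qed

lemma smooth_diff_at: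
  assumes "smooth_on S g" "open S" "x \<in> S" shows "g differentiable at x"
  using assms Ck_diff[of 0 S g] unfolding smooth_on_Ck differentiable_on_eq_differentiable_at[OF assms(2)] by blast

lemma set_integral_restrict_zero:
  assumes "B \<subseteq> A" "\<And>y. y \<in> A \<Longrightarrow> y \<notin> B \<Longrightarrow> g y = 0"
  shows "(LINT y:A|M. g y) = (LINT y:B|M. (g y :: real))"
  unfolding set_lebesgue_integral_def
  by (rule Bochner_Integration.integral_cong) (use assms in \<open>auto simp: indicator_def\<close>)

lemma Phd_zero:
  assumes "open U" "smooth_on (U \<times> UNIV) \<Phi>" "open V" "V \<subseteq> U" "x \<in> V"
    "\<And>x. x \<in> V \<Longrightarrow> \<Phi> (x, y) = 0" "i \<in> Basis"
  shows "pd \<Phi> (i, 0) (x, y) = 0"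
proof -
  have xU: "(x, y) \<in> U \<times> UNIV" using assms by auto
  have d: "\<Phi> differentiable at (x, y)"
    by (rule smooth_diff_at[OF assms(2) _ xU]) (simp add: open_Times assms(1))
  have h1: "((\<lambda>x. \<Phi> (x, y)) has_derivative (\<lambda>h. \<Sum>i\<in>Basis. (h \<bullet> i) * pd \<Phi> (i, 0) (x, y))) (at x)"
    by (rule slice_deriv[OF d])
  have h2: "((\<lambda>x. \<Phi> (x, y)) has_derivative (\<lambda>h. 0)) (at x)"
    using has_derivative_transform_within_open[OF has_derivative_const[of 0 "at x"] assms(3) assms(5), of "\<lambda>x. \<Phi> (x, y)"] assms(6)
    by auto
  have "(\<lambda>h. \<Sum>i\<in>Basis. (h \<bullet> i) * pd \<Phi> (i, 0) (x, y)) = (\<lambda>h. 0)"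
    using has_derivative_unique[OF h1 h2] .
  then have "(\<Sum>j\<in>Basis. (i \<bullet> j) * pd \<Phi> (j, 0) (x, y)) = 0" by metis
  then show ?thesis using sum_basis_inner[OF assms(7)] by simp
qed

lemma good_Phd:
  assumes "open U" "good \<Omega> U \<Phi>" "i \<in> Basis"
  shows "good \<Omega> U (pd \<Phi> (i, 0))"
proof -
  have sm: "smooth_on (U \<times> UNIV) \<Phi>" using assms(2) good_def by blast
  have i0: "(i, 0) \<in> (Basis :: ('a \<times> 'a) set)" using assms(3) by (simp add: Basis_prod_def)
  have "smooth_on (U \<times> UNIV) (pd \<Phi> (i, 0))"
    using smooth_pd[OF sm i0] .
  moreover have "\<forall>x0\<in>U. \<exists>V B. open V \<and> x0 \<in> V \<and> V \<subseteq> U \<and> compact B \<and> B \<subseteq> \<Omega> \<and> (\<forall>x\<in>V. \<forall>y. y \<notin> B \<longrightarrow> pd \<Phi> (i, 0) (x, y) = 0)"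
  proof
    fix x0 assume "x0 \<in> U"
    then obtain V B where VB: "open V" "x0 \<in> V" "V \<subseteq> U" "compact B" "B \<subseteq> \<Omega>" "\<forall>x\<in>V. \<forall>y. y \<notin> B \<longrightarrow> \<Phi> (x, y) = 0"
      using assms(2) unfolding good_def by blast
    have "\<forall>x\<in>V. \<forall>y. y \<notin> B \<longrightarrow> pd \<Phi> (i, 0) (x, y) = 0"
      using Phd_zero[OF assms(1) sm VB(1) VB(3) _ _ assms(3)] VB(6) by blast
    then show "\<exists>V B. open V \<and> x0 \<in> V \<and> V \<subseteq> U \<and> compact B \<and> B \<subseteq> \<Omega> \<and> (\<forall>x\<in>V. \<forall>y. y \<notin> B \<longrightarrow> pd \<Phi> (i, 0) (x, y) = 0)"
      using VB by blast
  qed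
  ultimately show ?thesis unfolding good_def by blast
qed

lemma deriv_TI:
  assumes U: "open U" and g: "good \<Omega> U \<Phi>" and x0: "x0 \<in> U"
    and floc: "\<forall>K. compact K \<and> K \<subseteq> \<Omega> \<longrightarrow> set_integrable lebesgue K f"
  shows "(TI \<Omega> f \<Phi> has_derivative (\<lambda>h. \<Sum>i\<in>Basis. (h \<bullet> i) * TI \<Omega> f (pd \<Phi> (i, 0)) x0)) (at x0)"
proof -
  have sm: "smooth_on (U \<times> UNIV) \<Phi>" using g good_def by blast
  have OU: "open (U \<times> (UNIV :: 'a set))" using U by (simp add: open_Times)
  obtain V B where VB: "open V" "x0 \<in> V" "V \<subseteq> U" "compact B" "B \<subseteq> \<Omega>" "\<forall>x\<in>V. \<forall>y. y \<notin> B \<longrightarrow> \<Phi> (x, y) = 0"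
    using g x0 unfolding good_def by blast
  have fi: "set_integrable lebesgue B f" using floc VB by blast
  have dif: "\<Phi> differentiable at (x, y)" if "x \<in> U" for x y
    using smooth_diff_at[OF sm OU] that by simp
  have cont\<Phi>: "continuous_on (U \<times> UNIV) \<Phi>"
    using sm Ck_diff[of 0 "U \<times> UNIV" \<Phi>] differentiable_imp_continuous_on unfolding smooth_on_Ck by blast
  have main: "((\<lambda>x. LINT y:B|lebesgue. \<Phi> (x, y) * f y) has_derivative
           (\<lambda>h. \<Sum>i\<in>Basis. (h \<bullet> i) * (LINT y:B|lebesgue. pd \<Phi> (i, 0) (x0, y) * f y))) (at x0)"
  proof (rule deriv_under_integral[OF VB(1,2,4) fi, where K="\<lambda>x y. \<Phi> (x, y)" and P="\<lambda>i x y. pd \<Phi> (i, 0) (x, y)"])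
    fix x y assume "x \<in> V"
    then show "((\<lambda>x. \<Phi> (x, y)) has_derivative (\<lambda>h. \<Sum>i\<in>Basis. h \<bullet> i * pd \<Phi> (i, 0) (x, y))) (at x)"
      using slice_deriv dif VB(3) by blast
  next
    fix i :: 'a assume i: "i \<in> Basis"
    have i0: "(i, 0) \<in> (Basis :: ('a \<times> 'a) set)" using i by (simp add: Basis_prod_def)
    have "continuous_on (U \<times> UNIV) (pd \<Phi> (i, 0))"
      using smooth_cont[OF smooth_pd[OF sm i0]] .
    then have "continuous_on (V \<times> UNIV) (pd \<Phi> (i, 0))"
      by (rule continuous_on_subset) (use VB in auto)
    then show "continuous_on (V \<times> UNIV) (\<lambda>p. pd \<Phi> (i, 0) (fst p, snd p))" by simp
  next
    fix x assume "x \<in> V"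
    then have "x \<in> U" using VB by auto
    have "continuous_on UNIV (\<lambda>y. \<Phi> (x, y))"
      by (rule continuous_on_compose2[OF cont\<Phi>]) (use \<open>x \<in> U\<close> in \<open>auto intro!: continuous_intros\<close>)
    then show "continuous_on UNIV (\<lambda>y. \<Phi> (x, y))" .
  qed
  have eq1: "TI \<Omega> f \<Phi> x = (LINT y:B|lebesgue. \<Phi> (x, y) * f y)" if "x \<in> V" for x
    unfolding TI_def by (rule set_integral_restrict_zero) (use VB that in auto)
  have eq2: "TI \<Omega> f (pd \<Phi> (i, 0)) x0 = (LINT y:B|lebesgue. pd \<Phi> (i, 0) (x0, y) * f y)" if i: "i \<in> Basis" for i
    unfolding TI_def
  proof (rule set_integral_restrict_zero)
    show "B \<subseteq> \<Omega>" by fact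
    fix y assume "y \<notin> B"
    then show "pd \<Phi> (i, 0) (x0, y) * f y = 0"
      using Phd_zero[OF U sm VB(1) VB(3) VB(2) _ i, of y] VB(6) by simp
  qed
  have main': "((\<lambda>x. LINT y:B|lebesgue. \<Phi> (x, y) * f y) has_derivative
           (\<lambda>h. \<Sum>i\<in>Basis. (h \<bullet> i) * TI \<Omega> f (pd \<Phi> (i, 0)) x0)) (at x0)"
    using main eq2 by simp
  show ?thesis
    by (rule has_derivative_transform_within_open[OF main' VB(1,2)]) (use eq1 in simp)
qed

lemma smooth_TI:
  assumes U: "open U" and floc: "\<forall>K. compact K \<and> K \<subseteq> \<Omega> \<longrightarrow> set_integrable lebesgue K f"
  shows "good \<Omega> U \<Phi> \<Longrightarrow> Ck n U (TI \<Omega> f \<Phi>)"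
proof (induction n arbitrary: \<Phi>)
  case 0
  then show ?case unfolding Ck_0 differentiable_on_eq_differentiable_at[OF U]
    using deriv_TI[OF U _ _ floc] unfolding differentiable_def by blast
next
  case (Suc n)
  have d: "TI \<Omega> f \<Phi> differentiable_on U"
    unfolding differentiable_on_eq_differentiable_at[OF U]
    using deriv_TI[OF U Suc.prems _ floc] unfolding differentiable_def by blast
  have "Ck n U (pd (TI \<Omega> f \<Phi>) i)" if i: "i \<in> Basis" for i
  proof (rule Ck_cong[OF U])
    show "Ck n U (TI \<Omega> f (pd \<Phi> (i, 0)))" using Suc.IH good_Phd[OF U Suc.prems i] by blast
    fix x assume x: "x \<in> U"
    have "pd (TI \<Omega> f \<Phi>) i x = (\<Sum>j\<in>Basis. (i \<bullet> j) * TI \<Omega> f (pd \<Phi> (j, 0)) x)"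
      by (rule pd_has_derivative[OF deriv_TI[OF U Suc.prems x floc]])
    also have "\<dots> = TI \<Omega> f (pd \<Phi> (i, 0)) x"
      using sum_basis_inner[OF i] .
    finally show "TI \<Omega> f (pd \<Phi> (i, 0)) x = pd (TI \<Omega> f \<Phi>) i x" by simp
  qed
  then show ?case unfolding Ck_Suc using d by blast
qed

definition Kern :: "('a::euclidean_space \<Rightarrow> real) \<Rightarrow> ('a \<Rightarrow> real) \<Rightarrow> 'a \<times> 'a \<Rightarrow> real" where
  "Kern \<rho> \<eta> p = C_coef \<rho> \<eta> (fst p) * \<rho> ((1 / \<eta> (fst p)) *\<^sub>R (fst p - snd p))"

lemma Kern_smooth:
  fixes \<rho> \<eta> :: "'a::euclidean_space \<Rightarrow> real"
  assumes \<Omega>: "open \<Omega>" and r: "smooth_on UNIV \<rho>" and e: "smooth_on UNIV \<eta>"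
    and pos: "\<And>x. x \<in> \<Omega> \<Longrightarrow> \<eta> x > 0"
  shows "smooth_on (\<Omega> \<times> UNIV) (Kern \<rho> \<eta>)"
  unfolding smooth_on_Ck
proof
  fix n
  have O: "open (\<Omega> \<times> (UNIV::'a set))" using \<Omega> by (simp add: open_Times)
  have He: "Ck n (\<Omega> \<times> (UNIV::'a set)) (\<lambda>p. \<eta> (fst p))"
    using Ck_fst_comp[OF \<Omega> Ck_subset[of n UNIV \<eta> \<Omega>]] e unfolding smooth_on_Ck by blast
  have Hinv: "Ck n (\<Omega> \<times> (UNIV::'a set)) (\<lambda>p. inverse (\<eta> (fst p)))"
    by (rule Ck_inverse[OF O He]) (use pos in auto)
  have HC: "Ck n (\<Omega> \<times> (UNIV::'a set)) (\<lambda>p. C_coef \<rho> \<eta> (fst p))"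
  proof (rule Ck_cong[OF O])
    show "Ck n (\<Omega> \<times> (UNIV::'a set)) (\<lambda>p. M_rho \<rho> * inverse (\<eta> (fst p) ^ DIM('a)))"
      by (intro Ck_mult[OF O] Ck_const Ck_inverse[OF O] Ck_power[OF O He])
         (use pos in \<open>auto\<close>)
    show "M_rho \<rho> * inverse (\<eta> (fst y) ^ DIM('a)) = C_coef \<rho> \<eta> (fst y)" for y
      unfolding C_coef_def by (simp add: divide_inverse)
  qed
  have HG: "Ck n (\<Omega> \<times> (UNIV::'a set)) (\<lambda>p. \<rho> ((1 / \<eta> (fst p)) *\<^sub>R (fst p - snd p)))"
  proof (rule Ck_compose[OF O open_UNIV, where \<rho>=\<rho>])
    show "Ck n UNIV \<rho>" using r unfolding smooth_on_Ck by blast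
    show "(\<lambda>p. (1 / \<eta> (fst p)) *\<^sub>R (fst p - snd p)) ` (\<Omega> \<times> UNIV) \<subseteq> UNIV" by simp
    show "\<forall>j\<in>Basis. Ck n (\<Omega> \<times> UNIV) (\<lambda>x. (1 / \<eta> (fst x)) *\<^sub>R (fst x - snd x) \<bullet> j)"
    proof
      fix j :: 'a assume j: "j \<in> Basis"
      show "Ck n (\<Omega> \<times> UNIV) (\<lambda>x. (1 / \<eta> (fst x)) *\<^sub>R (fst x - snd x) \<bullet> j)"
      proof (rule Ck_cong[OF O])
        have "bounded_linear (\<lambda>p::'a\<times>'a. (fst p - snd p) \<bullet> j)"
          by (intro bounded_linear_inner_left_comp bounded_linear_sub bounded_linear_fst bounded_linear_snd)
        then show "Ck n (\<Omega> \<times> UNIV) (\<lambda>p::'a\<times>'a. inverse (\<eta> (fst p)) * ((fst p - snd p) \<bullet> j))"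
          by (intro Ck_mult[OF O] Hinv Ck_linear)
        show "inverse (\<eta> (fst y)) * ((fst y - snd y) \<bullet> j) = (1 / \<eta> (fst y)) *\<^sub>R (fst y - snd y) \<bullet> j" for y :: "'a \<times> 'a"
          by (simp add: divide_inverse)
      qed
    qed
  qed
  show "Ck n (\<Omega> \<times> UNIV) (Kern \<rho> \<eta>)"
    unfolding Kern_def by (rule Ck_mult[OF O HC HG])
qed



lemma in_Omega_ball:
  fixes \<Omega> :: "'a::euclidean_space set"
  assumes "x \<in> \<Omega>" "dist x y < infdist x (frontier \<Omega>)"
  shows "y \<in> \<Omega>"
proof (rule ccontr)
  assume y: "y \<notin> \<Omega>"
  have "closed_segment x y \<inter> frontier \<Omega> \<noteq> {}"
    by (rule connected_Int_frontier) (use assms y in auto)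
  then obtain p where p: "p \<in> closed_segment x y" "p \<in> frontier \<Omega>" by blast
  have "infdist x (frontier \<Omega>) \<le> dist x p" using infdist_le[OF p(2)] .
  also have "\<dots> \<le> dist x y" using dist_in_closed_segment[OF p(1)] by (simp add: dist_commute)
  finally show False using assms(2) by simp
qed

lemma cball_in_Omega:
  fixes \<Omega> :: "'a::euclidean_space set"
  assumes "x \<in> \<Omega>" "r < infdist x (frontier \<Omega>)"
  shows "cball x r \<subseteq> \<Omega>"
  using in_Omega_ball[OF assms(1)] assms(2) by force

lemma eta_pos:
  fixes \<Omega> :: "'a::euclidean_space set"
  assumes "open \<Omega>" "reg_dist \<Omega> \<eta>" "x \<in> \<Omega>"
  shows "\<eta> x > 0"
proof -
  have "x \<notin> frontier \<Omega>" using assms(1,3) by (simp add: frontier_def interior_open)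
  then have "\<eta> x \<noteq> 0" using assms(2) unfolding reg_dist_def by blast
  moreover have "\<eta> x \<ge> 0" using assms(2) unfolding reg_dist_def by blast
  ultimately show ?thesis by simp
qed

lemma eta_lt:
  fixes \<Omega> :: "'a::euclidean_space set"
  assumes "open \<Omega>" "reg_dist \<Omega> \<eta>" "x \<in> \<Omega>"
  shows "\<eta> x < infdist x (frontier \<Omega>)"
proof -
  have "x \<notin> frontier \<Omega>" using assms(1,3) by (simp add: frontier_def interior_open)
  then show ?thesis using assms(2) unfolding reg_dist_def by blast
qed

lemma mollifier_zero:
  assumes "mollifier \<rho>" "norm w \<ge> 1" shows "\<rho> w = 0"
  using assms unfolding mollifier_def by blast

lemma Kern_zero:
  assumes "mollifier \<rho>" "\<eta> x > 0" "dist x y \<ge> \<eta> x"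
  shows "Kern \<rho> \<eta> (x, y) = 0"
proof -
  have "norm ((1 / \<eta> x) *\<^sub>R (x - y)) = dist x y / \<eta> x" using assms(2) by (simp add: dist_norm)
  also have "\<dots> \<ge> 1" using assms(2,3) by simp
  finally show ?thesis unfolding Kern_def using mollifier_zero[OF assms(1)] by simp
qed

lemma Kern_good:
  fixes \<Omega> :: "'a::euclidean_space set"
  assumes O: "open \<Omega>" and m: "mollifier \<rho>" and r: "reg_dist \<Omega> \<eta>"
  shows "good \<Omega> \<Omega> (Kern \<rho> \<eta>)"
  unfolding good_def
proof (intro conjI ballI)
  show "smooth_on (\<Omega> \<times> UNIV) (Kern \<rho> \<eta>)"
    using Kern_smooth[OF O] m r eta_pos[OF O r] unfolding mollifier_def reg_dist_def by blast
  fix x0 assume x0: "x0 \<in> \<Omega>"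
  define \<delta> where "\<delta> = infdist x0 (frontier \<Omega>) - \<eta> x0"
  have \<delta>: "\<delta> > 0" using eta_lt[OF O r x0] \<delta>_def by simp
  have "continuous_on UNIV \<eta>" using r smooth_cont unfolding reg_dist_def by blast
  then have "isCont \<eta> x0" by (simp add: continuous_on_eq_continuous_at)
  then obtain r1 where r1: "r1 > 0" "\<And>x. dist x x0 < r1 \<Longrightarrow> dist (\<eta> x) (\<eta> x0) < \<delta> / 3"
    using \<delta> unfolding continuous_at_eps_delta by (metis divide_pos_pos zero_less_numeral)
  define V where "V = ball x0 (min r1 (\<delta> / 3)) \<inter> \<Omega>"
  define B where "B = cball x0 (\<eta> x0 + 2 * \<delta> / 3)"
  have "open V" unfolding V_def using O by auto
  moreover have "x0 \<in> V" unfolding V_def using x0 r1 \<delta> by auto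
  moreover have "V \<subseteq> \<Omega>" unfolding V_def by auto
  moreover have "compact B" unfolding B_def by simp
  moreover have "B \<subseteq> \<Omega>"
  proof -
    have "\<eta> x0 + 2 * \<delta> / 3 < infdist x0 (frontier \<Omega>)" using \<delta> unfolding \<delta>_def by (simp add: field_simps)
    then show ?thesis unfolding B_def by (rule cball_in_Omega[OF x0])
  qed
  moreover have "\<forall>x\<in>V. \<forall>y. y \<notin> B \<longrightarrow> Kern \<rho> \<eta> (x, y) = 0"
  proof (intro ballI allI impI)
    fix x y assume x: "x \<in> V" and y: "y \<notin> B"
    have xO: "x \<in> \<Omega>" using x V_def by auto
    have dx: "dist x x0 < \<delta> / 3" "dist x x0 < r1" using x unfolding V_def by (auto simp: dist_commute)
    have "\<bar>\<eta> x - \<eta> x0\<bar> < \<delta> / 3" using r1(2)[OF dx(2)] by (simp add: dist_real_def)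
    then have "\<eta> x < \<eta> x0 + \<delta> / 3" by linarith
    moreover have "dist x0 y > \<eta> x0 + 2 * \<delta> / 3" using y unfolding B_def by simp
    moreover have "dist x0 y \<le> dist x0 x + dist x y" by (rule dist_triangle)
    ultimately have "dist x y \<ge> \<eta> x" using dx by (simp add: dist_commute)
    then show "Kern \<rho> \<eta> (x, y) = 0" using Kern_zero[where \<eta>=\<eta> and x=x, OF m eta_pos[OF O r xO]] by simp
  qed
  ultimately show "\<exists>V B. open V \<and> x0 \<in> V \<and> V \<subseteq> \<Omega> \<and> compact B \<and> B \<subseteq> \<Omega> \<and> (\<forall>x\<in>V. \<forall>y. y \<notin> B \<longrightarrow> Kern \<rho> \<eta> (x, y) = 0)"
    by blast
qed

lemma T_op_TI: "T_op \<Omega> \<rho> \<eta> f = TI \<Omega> f (Kern \<rho> \<eta>)"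
  unfolding T_op_def TI_def Kern_def fun_eq_iff
  by (simp add: mult.assoc)

lemma T_smooth:
  fixes \<Omega> :: "'a::euclidean_space set"
  assumes O: "open \<Omega>" and m: "mollifier \<rho>" and r: "reg_dist \<Omega> \<eta>"
    and floc: "\<forall>K. compact K \<and> K \<subseteq> \<Omega> \<longrightarrow> set_integrable lebesgue K f"
  shows "smooth_on \<Omega> (T_op \<Omega> \<rho> \<eta> f)"
  unfolding smooth_on_Ck T_op_TI using smooth_TI[OF O floc Kern_good[OF O m r]] by blast



lemma fd_expand:
  fixes g :: "'a::euclidean_space \<Rightarrow> real"
  assumes "(g has_derivative D) (at w)"
  shows "D v = (\<Sum>j\<in>Basis. (v \<bullet> j) * pd g j w)"
proof -
  have lin: "linear D" using assms has_derivative_linear by blast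
  have "D v = D (\<Sum>j\<in>Basis. (v \<bullet> j) *\<^sub>R j)" by (simp add: euclidean_representation)
  also have "\<dots> = (\<Sum>j\<in>Basis. D ((v \<bullet> j) *\<^sub>R j))" by (rule linear_sum[OF lin])
  also have "\<dots> = (\<Sum>j\<in>Basis. (v \<bullet> j) * D j)" using linear_scale[OF lin] by simp
  also have "\<dots> = (\<Sum>j\<in>Basis. (v \<bullet> j) * pd g j w)" using pd_has_derivative[OF assms] by simp
  finally show ?thesis .
qed

lemma Kern_pd:
  fixes \<rho> \<eta> :: "'a::euclidean_space \<Rightarrow> real"
  assumes eta_d: "(\<eta> has_derivative D\<eta>) (at x)" and e: "\<eta> x > 0"
    and rho_d: "\<rho> differentiable at ((1 / \<eta> x) *\<^sub>R (x - y))"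
    and Kd: "Kern \<rho> \<eta> differentiable at (x, y)"
    and i: "i \<in> Basis"
  shows "pd (Kern \<rho> \<eta>) (i, 0) (x, y) =
     C_coef \<rho> \<eta> x / \<eta> x * pd \<rho> i ((1 / \<eta> x) *\<^sub>R (x - y))
     - C_coef \<rho> \<eta> x * D\<eta> i / \<eta> x * (\<Sum>j\<in>Basis. (((1 / \<eta> x) *\<^sub>R (x - y)) \<bullet> j) * pd \<rho> j ((1 / \<eta> x) *\<^sub>R (x - y)))
     - real DIM('a) * C_coef \<rho> \<eta> x * D\<eta> i / \<eta> x * \<rho> ((1 / \<eta> x) *\<^sub>R (x - y))"
proof -
  define z where "z = (1 / \<eta> x) *\<^sub>R (x - y)"
  define N where "N = DIM('a)"
  define M where "M = M_rho \<rho>"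
  define D\<rho> where "D\<rho> = frechet_derivative \<rho> (at z)"
  define S where "S = (\<Sum>j\<in>Basis. (z \<bullet> j) * pd \<rho> j z)"
  have hr: "(\<rho> has_derivative D\<rho>) (at z)" using rho_d frechet_derivative_works D\<rho>_def z_def by blast
  have lin: "linear D\<rho>" using hr has_derivative_linear by blast
  have hz: "((\<lambda>x'. (1 / \<eta> x') *\<^sub>R (x' - y)) has_derivative
      (\<lambda>h. (1 / \<eta> x) *\<^sub>R h + ((0 * \<eta> x - 1 * D\<eta> h) / (\<eta> x * \<eta> x)) *\<^sub>R (x - y))) (at x)"
  proof -
    have hxy: "((\<lambda>x'. x' - y) has_derivative (\<lambda>h. h)) (at x)"
      using has_derivative_diff[OF has_derivative_ident has_derivative_const[of y "at x"]] by simp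
    show ?thesis
      by (intro has_derivative_scaleR has_derivative_divide' has_derivative_const eta_d hxy)
         (use e in simp)
  qed
  have hC: "(C_coef \<rho> \<eta> has_derivative
      (\<lambda>h. (0 * \<eta> x ^ N - M * (of_nat N * D\<eta> h * \<eta> x ^ (N - 1))) / (\<eta> x ^ N * \<eta> x ^ N))) (at x)"
  proof -
    have "C_coef \<rho> \<eta> = (\<lambda>x'. M / \<eta> x' ^ N)" unfolding C_coef_def M_def N_def by (simp add: fun_eq_iff)
    moreover have "((\<lambda>x'. M / \<eta> x' ^ N) has_derivative
      (\<lambda>h. (0 * \<eta> x ^ N - M * (of_nat N * D\<eta> h * \<eta> x ^ (N - 1))) / (\<eta> x ^ N * \<eta> x ^ N))) (at x)"
      by (intro has_derivative_divide' has_derivative_const has_derivative_power eta_d) (use e in simp)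
    ultimately show ?thesis by simp
  qed
  have hK: "((\<lambda>x'. Kern \<rho> \<eta> (x', y)) has_derivative
      (\<lambda>h. C_coef \<rho> \<eta> x * D\<rho> ((1 / \<eta> x) *\<^sub>R h + ((0 * \<eta> x - 1 * D\<eta> h) / (\<eta> x * \<eta> x)) *\<^sub>R (x - y))
         + (0 * \<eta> x ^ N - M * (of_nat N * D\<eta> h * \<eta> x ^ (N - 1))) / (\<eta> x ^ N * \<eta> x ^ N) * \<rho> z)) (at x)"
  proof -
    have "((\<lambda>x'. \<rho> ((1 / \<eta> x') *\<^sub>R (x' - y))) has_derivative
        (\<lambda>h. D\<rho> ((1 / \<eta> x) *\<^sub>R h + ((0 * \<eta> x - 1 * D\<eta> h) / (\<eta> x * \<eta> x)) *\<^sub>R (x - y)))) (at x)"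
      using diff_chain_at[OF hz, of \<rho> D\<rho>] hr unfolding z_def by (simp add: o_def)
    from has_derivative_mult[OF hC this] show ?thesis
      unfolding Kern_def z_def by simp
  qed
  have u: "pd (Kern \<rho> \<eta>) (i, 0) (x, y) =
      C_coef \<rho> \<eta> x * D\<rho> ((1 / \<eta> x) *\<^sub>R i + ((0 * \<eta> x - 1 * D\<eta> i) / (\<eta> x * \<eta> x)) *\<^sub>R (x - y))
         + (0 * \<eta> x ^ N - M * (of_nat N * D\<eta> i * \<eta> x ^ (N - 1))) / (\<eta> x ^ N * \<eta> x ^ N) * \<rho> z"
  proof -
    have "(\<lambda>h. \<Sum>j\<in>Basis. (h \<bullet> j) * pd (Kern \<rho> \<eta>) (j, 0) (x, y)) = (\<lambda>h. C_coef \<rho> \<eta> x * D\<rho> ((1 / \<eta> x) *\<^sub>R h + ((0 * \<eta> x - 1 * D\<eta> h) / (\<eta> x * \<eta> x)) *\<^sub>R (x - y))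
         + (0 * \<eta> x ^ N - M * (of_nat N * D\<eta> h * \<eta> x ^ (N - 1))) / (\<eta> x ^ N * \<eta> x ^ N) * \<rho> z)"
      by (rule has_derivative_unique[OF slice_deriv[OF Kd] hK])
    then have "(\<Sum>j\<in>Basis. (i \<bullet> j) * pd (Kern \<rho> \<eta>) (j, 0) (x, y)) = C_coef \<rho> \<eta> x * D\<rho> ((1 / \<eta> x) *\<^sub>R i + ((0 * \<eta> x - 1 * D\<eta> i) / (\<eta> x * \<eta> x)) *\<^sub>R (x - y))
         + (0 * \<eta> x ^ N - M * (of_nat N * D\<eta> i * \<eta> x ^ (N - 1))) / (\<eta> x ^ N * \<eta> x ^ N) * \<rho> z"
      by metis
    then show ?thesis using sum_basis_inner[OF i] by simp
  qed
  have xy: "x - y = \<eta> x *\<^sub>R z" unfolding z_def using e by simp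
  have Dxy: "D\<rho> (x - y) = \<eta> x * S"
    unfolding xy linear_scale[OF lin] S_def using fd_expand[OF hr, of z] by simp
  have Di: "D\<rho> i = pd \<rho> i z" using pd_has_derivative[OF hr] by simp
  have lin1: "D\<rho> ((1 / \<eta> x) *\<^sub>R i + ((0 * \<eta> x - 1 * D\<eta> i) / (\<eta> x * \<eta> x)) *\<^sub>R (x - y))
     = (1 / \<eta> x) * pd \<rho> i z - (D\<eta> i / (\<eta> x * \<eta> x)) * (\<eta> x * S)"
  proof -
    have g: "D\<rho> (a *\<^sub>R i + b *\<^sub>R (x - y)) = a * D\<rho> i + b * D\<rho> (x - y)" for a b
      using linear_add[OF lin] linear_scale[OF lin] by simp
    show ?thesis unfolding g Di Dxy using e by (simp add: field_simps)
  qed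
  obtain m where m: "N = Suc m" unfolding N_def using DIM_positive not0_implies_Suc by blast
  have C: "C_coef \<rho> \<eta> x = M / \<eta> x ^ N" unfolding C_coef_def M_def N_def by simp
  show ?thesis
    unfolding u lin1 z_def[symmetric] S_def[symmetric] N_def[symmetric] C m using e
    by (simp add: field_simps)
qed



lemma zmap_deriv:
  "((\<lambda>y. (1 / e) *\<^sub>R (x - y)) has_derivative (\<lambda>h. (- (1 / e)) *\<^sub>R h)) (at y)"
proof -
  have "((\<lambda>y. (1 / e) *\<^sub>R (x - y)) has_derivative (\<lambda>h. (1 / e) *\<^sub>R (0 - h))) (at y)"
    by (intro has_derivative_scaleR_right has_derivative_diff has_derivative_const has_derivative_ident)
  then show ?thesis by (simp add: scaleR_right_diff_distrib)
qed

lemma phi1_pd: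
  fixes \<rho> :: "'a::euclidean_space \<Rightarrow> real"
  assumes "\<rho> differentiable at ((1 / e) *\<^sub>R (x - y))"
  shows "pd (\<lambda>y. \<rho> ((1 / e) *\<^sub>R (x - y))) i y = - (1 / e) * pd \<rho> i ((1 / e) *\<^sub>R (x - y))"
proof -
  define D where "D = frechet_derivative \<rho> (at ((1 / e) *\<^sub>R (x - y)))"
  have hr: "(\<rho> has_derivative D) (at ((1 / e) *\<^sub>R (x - y)))" using assms frechet_derivative_works D_def by blast
  have "((\<lambda>y. \<rho> ((1 / e) *\<^sub>R (x - y))) has_derivative (\<lambda>h. D ((- (1 / e)) *\<^sub>R h))) (at y)"
    using diff_chain_at[OF zmap_deriv hr] by (simp add: o_def)
  then have "pd (\<lambda>y. \<rho> ((1 / e) *\<^sub>R (x - y))) i y = D ((- (1 / e)) *\<^sub>R i)" by (rule pd_has_derivative)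
  also have "\<dots> = - (1 / e) * D i" using linear_scale[OF has_derivative_linear[OF hr], of "- (1 / e)" i] by (simp only: real_scaleR_def)
  also have "D i = pd \<rho> i ((1 / e) *\<^sub>R (x - y))" using pd_has_derivative[OF hr] by simp
  finally show ?thesis .
qed

lemma phi2_pd:
  fixes \<rho> :: "'a::euclidean_space \<Rightarrow> real"
  assumes "\<rho> differentiable at ((1 / e) *\<^sub>R (x - y))" "j \<in> Basis" "e \<noteq> 0"
  shows "pd (\<lambda>y. \<rho> ((1 / e) *\<^sub>R (x - y)) * ((y - x) \<bullet> j)) j y
     = (((1 / e) *\<^sub>R (x - y)) \<bullet> j) * pd \<rho> j ((1 / e) *\<^sub>R (x - y)) + \<rho> ((1 / e) *\<^sub>R (x - y))"
proof -
  define D where "D = frechet_derivative \<rho> (at ((1 / e) *\<^sub>R (x - y)))"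
  have hr: "(\<rho> has_derivative D) (at ((1 / e) *\<^sub>R (x - y)))" using assms frechet_derivative_works D_def by blast
  have h1: "((\<lambda>y. \<rho> ((1 / e) *\<^sub>R (x - y))) has_derivative (\<lambda>h. D ((- (1 / e)) *\<^sub>R h))) (at y)"
    using diff_chain_at[OF zmap_deriv hr] by (simp add: o_def)
  have h2: "((\<lambda>y. (y - x) \<bullet> j) has_derivative (\<lambda>h. h \<bullet> j)) (at y)"
  proof -
    have "((\<lambda>y. (y - x) \<bullet> j) has_derivative (\<lambda>h. (h - 0) \<bullet> j)) (at y)"
      by (intro has_derivative_inner_left has_derivative_diff has_derivative_ident has_derivative_const)
    then show ?thesis by simp
  qed
  have "pd (\<lambda>y. \<rho> ((1 / e) *\<^sub>R (x - y)) * ((y - x) \<bullet> j)) j y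
      = \<rho> ((1 / e) *\<^sub>R (x - y)) * (j \<bullet> j) + D ((- (1 / e)) *\<^sub>R j) * ((y - x) \<bullet> j)"
    by (rule pd_has_derivative[OF has_derivative_mult[OF h1 h2]])
  also have "D ((- (1 / e)) *\<^sub>R j) = - (1 / e) * D j" using linear_scale[OF has_derivative_linear[OF hr], of "- (1 / e)" j] by (simp only: real_scaleR_def)
  also have "D j = pd \<rho> j ((1 / e) *\<^sub>R (x - y))" using pd_has_derivative[OF hr] by simp
  finally have fin: "pd (\<lambda>y. \<rho> ((1 / e) *\<^sub>R (x - y)) * ((y - x) \<bullet> j)) j y
      = \<rho> ((1 / e) *\<^sub>R (x - y)) * (j \<bullet> j) + (- (1 / e) * pd \<rho> j ((1 / e) *\<^sub>R (x - y))) * ((y - x) \<bullet> j)" .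
  have jj: "j \<bullet> j = 1" using assms(2) by simp
  have zj: "((1 / e) *\<^sub>R (x - y)) \<bullet> j = - (1 / e) * ((y - x) \<bullet> j)"
    by (simp add: inner_diff_left algebra_simps)
  show ?thesis unfolding fin jj zj using assms(3) by (simp add: field_simps)
qed

lemma Ck_zmap:
  fixes x :: "'a::euclidean_space"
  shows "Ck n UNIV (\<lambda>y. (1 / e) *\<^sub>R (x - y) \<bullet> j)"
proof (rule Ck_cong[OF open_UNIV])
  show "Ck n UNIV (\<lambda>y. (1 / e) * (x \<bullet> j) + y \<bullet> ((- (1 / e)) *\<^sub>R j))"
    by (intro Ck_add[OF open_UNIV] Ck_const Ck_linear bounded_linear_inner_left)
  show "(1 / e) * (x \<bullet> j) + y \<bullet> ((- (1 / e)) *\<^sub>R j) = (1 / e) *\<^sub>R (x - y) \<bullet> j" for y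
    by (simp add: inner_diff_left algebra_simps)
qed

lemma phi1_smooth:
  fixes \<rho> :: "'a::euclidean_space \<Rightarrow> real"
  assumes "smooth_on UNIV \<rho>"
  shows "smooth_on UNIV (\<lambda>y. \<rho> ((1 / e) *\<^sub>R (x - y)))"
  unfolding smooth_on_Ck
proof
  fix n
  show "Ck n UNIV (\<lambda>y. \<rho> ((1 / e) *\<^sub>R (x - y)))"
    by (rule Ck_compose[OF open_UNIV open_UNIV]) (use assms Ck_zmap in \<open>auto simp: smooth_on_Ck\<close>)
qed

lemma phi2_smooth:
  fixes \<rho> :: "'a::euclidean_space \<Rightarrow> real"
  assumes "smooth_on UNIV \<rho>"
  shows "smooth_on UNIV (\<lambda>y. \<rho> ((1 / e) *\<^sub>R (x - y)) * ((y - x) \<bullet> j))"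
  unfolding smooth_on_Ck
proof
  fix n
  have a: "Ck n UNIV (\<lambda>y. \<rho> ((1 / e) *\<^sub>R (x - y)))" using phi1_smooth[OF assms] smooth_on_Ck by blast
  have b: "Ck n UNIV (\<lambda>y. (y - x) \<bullet> j)"
  proof (rule Ck_cong[OF open_UNIV])
    show "Ck n UNIV (\<lambda>y. y \<bullet> j + (- (x \<bullet> j)))"
      by (intro Ck_add[OF open_UNIV] Ck_const Ck_linear bounded_linear_inner_left)
    show "y \<bullet> j + (- (x \<bullet> j)) = (y - x) \<bullet> j" for y by (simp add: inner_diff_left)
  qed
  show "Ck n UNIV (\<lambda>y. \<rho> ((1 / e) *\<^sub>R (x - y)) * ((y - x) \<bullet> j))"
    by (rule Ck_mult[OF open_UNIV a b])
qed

lemma test_funI: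
  assumes "smooth_on UNIV \<phi>" "\<And>y. \<phi> y \<noteq> 0 \<Longrightarrow> dist x y < e" "cball x e \<subseteq> \<Omega>"
  shows "test_fun \<Omega> \<phi>"
proof -
  have sub: "{y. \<phi> y \<noteq> 0} \<subseteq> cball x e" using assms(2) by fastforce
  have cl: "closure {y. \<phi> y \<noteq> 0} \<subseteq> cball x e" by (rule closure_minimal[OF sub closed_cball])
  have "compact (closure {y. \<phi> y \<noteq> 0})"
    using cl by (meson bounded_cball bounded_subset closed_closure compact_eq_bounded_closed)
  then show ?thesis unfolding test_fun_def using assms(1) cl assms(3) by blast
qed

lemma rho_supp:
  assumes "mollifier \<rho>" "e > 0" "\<rho> ((1 / e) *\<^sub>R (x - y)) \<noteq> 0"
  shows "dist x y < e"
proof (rule ccontr)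
  assume "\<not> dist x y < e"
  then have "norm ((1 / e) *\<^sub>R (x - y)) \<ge> 1" using assms(2) by (simp add: dist_norm)
  then show False using assms(1,3) mollifier_zero by blast
qed



lemma int_Omega:
  fixes g f :: "'a::euclidean_space \<Rightarrow> real"
  assumes "continuous_on UNIV g" "compact B" "B \<subseteq> \<Omega>" "\<And>y. y \<notin> B \<Longrightarrow> g y = 0"
    "set_integrable lebesgue B f"
  shows "set_integrable lebesgue \<Omega> (\<lambda>y. g y * f y)"
proof -
  have eq: "(\<lambda>y. indicator \<Omega> y *\<^sub>R (g y * f y)) = (\<lambda>y. indicator B y *\<^sub>R (g y * f y))"
    using assms(3,4) by (auto simp: indicator_def fun_eq_iff)
  show ?thesis using int_cont[OF assms(1,2,5)] unfolding set_integrable_def eq .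
qed

lemma mu_int:
  fixes w :: "'a::euclidean_space \<Rightarrow> 'b::euclidean_space" and g :: "'a \<Rightarrow> real"
  assumes sets: "sets \<mu> = sets borel" and g: "continuous_on UNIV g" and B: "compact B" "B \<subseteq> \<Omega>"
    and z: "\<And>y. y \<notin> B \<Longrightarrow> g y = 0" and fin: "emeasure \<mu> B < \<infinity>"
    and w: "w \<in> borel_measurable borel" and wb: "\<And>y. y \<in> \<Omega> \<Longrightarrow> norm (w y) \<le> 1" and O: "open \<Omega>"
  shows "set_integrable \<mu> \<Omega> (\<lambda>y. g y *\<^sub>R w y)"
proof -
  have "bounded (g ` B)"
    using g B by (meson compact_continuous_image compact_imp_bounded continuous_on_subset top_greatest)
  then obtain c where c: "\<And>y. y \<in> B \<Longrightarrow> norm (g y) \<le> c" unfolding bounded_iff by blast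
  have Bs: "B \<in> sets \<mu>" unfolding sets using B by (simp add: borel_compact)
  have i1: "integrable \<mu> (\<lambda>y. indicator B y *\<^sub>R c)" by (rule integrable_indicator[OF Bs fin])
  have gm: "g \<in> borel_measurable borel" using g by (rule borel_measurable_continuous_onI)
  have Om: "\<Omega> \<in> sets borel" using O by simp
  have mb: "(\<lambda>y. indicator \<Omega> y *\<^sub>R (g y *\<^sub>R w y)) \<in> borel_measurable borel"
    by (intro borel_measurable_scaleR borel_measurable_indicator Om gm w)
  have m: "(\<lambda>y. indicator \<Omega> y *\<^sub>R (g y *\<^sub>R w y)) \<in> borel_measurable \<mu>"
    using mb measurable_cong_sets[OF sets refl] by blast
  show ?thesis unfolding set_integrable_def
  proof (rule Bochner_Integration.integrable_bound[OF i1 m], rule AE_I2)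
    fix y
    show "norm (indicator \<Omega> y *\<^sub>R (g y *\<^sub>R w y)) \<le> norm (indicator B y *\<^sub>R c)"
    proof (cases "y \<in> B")
      case True
      then have yO: "y \<in> \<Omega>" using B by auto
      have "norm (g y) * norm (w y) \<le> c * 1"
        by (intro mult_mono c[OF True] wb[OF yO]) (use c[OF True] in auto)
      then show ?thesis using True yO by (simp add: indicator_def)
    next
      case False
      then show ?thesis using z by (simp add: indicator_def)
    qed
  qed
qed

lemma pd_zero_open:
  assumes "open S" "\<And>w. w \<in> S \<Longrightarrow> g w = 0" "w \<in> S"
  shows "pd g v w = 0"
proof -
  have "(g has_derivative (\<lambda>h. 0)) (at w)"
    using has_derivative_transform_within_open[OF has_derivative_const[of 0 "at w"] assms(1,3), of g] assms(2) by auto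
  then show ?thesis by (rule pd_has_derivative)
qed

lemma rho_pd_zero:
  assumes "mollifier \<rho>" "norm w > 1"
  shows "pd \<rho> j w = 0"
proof (rule pd_zero_open[of "{w. norm w > 1}"])
  show "open {w :: 'a. norm w > 1}" by (simp add: open_Collect_less continuous_on_norm_id continuous_on_const)
  show "\<And>w. w \<in> {w. 1 < norm w} \<Longrightarrow> \<rho> w = 0" using mollifier_zero[OF assms(1)] by simp
  show "w \<in> {w. 1 < norm w}" using assms(2) by simp
qed

lemma z_out:
  assumes "e > 0" "y \<notin> cball x e"
  shows "norm ((1 / e) *\<^sub>R (x - y)) > 1"
  using assms by (simp add: dist_norm)



context
  fixes \<Omega> :: "'a::euclidean_space set" and \<rho> \<eta> f :: "'a \<Rightarrow> real"
    and \<mu> :: "'a measure" and \<sigma> :: "'a \<Rightarrow> 'a" and x :: 'a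
  assumes O: "open \<Omega>" and m: "mollifier \<rho>" and r: "reg_dist \<Omega> \<eta>"
    and bv: "BV_loc_with_deriv \<Omega> f \<mu> \<sigma>" and x: "x \<in> \<Omega>"
begin

lemma e_pos: "\<eta> x > 0" using eta_pos[OF O r x] .
lemma Bsub: "cball x (\<eta> x) \<subseteq> \<Omega>" using cball_in_Omega[OF x eta_lt[OF O r x]] .
lemma rs: "smooth_on UNIV \<rho>" using m unfolding mollifier_def by blast
lemma es: "smooth_on UNIV \<eta>" using r unfolding reg_dist_def by blast
lemma rd: "\<rho> differentiable at w" by (rule smooth_diff_at[OF rs open_UNIV UNIV_I])
lemmas bvd = bv[unfolded BV_loc_with_deriv_def]
lemma floc: "\<forall>K. compact K \<and> K \<subseteq> \<Omega> \<longrightarrow> set_integrable lebesgue K f"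
  using bvd by (rule conjunct1)
lemma fB: "set_integrable lebesgue (cball x (\<eta> x)) f" using floc Bsub compact_cball by blast
lemma sets_mu: "sets \<mu> = sets borel" using bvd[THEN conjunct2, THEN conjunct1] .
lemma finK: "\<forall>K. compact K \<and> K \<subseteq> \<Omega> \<longrightarrow> emeasure \<mu> K < \<infinity>"
  using bvd[THEN conjunct2, THEN conjunct2, THEN conjunct1] .
lemma fin_mu: "emeasure \<mu> (cball x (\<eta> x)) < \<infinity>" using finK Bsub compact_cball by blast
lemma sig_m: "\<sigma> \<in> borel_measurable borel"
  using bvd[THEN conjunct2, THEN conjunct2, THEN conjunct2, THEN conjunct1] .
lemma sig_n: "y \<in> \<Omega> \<Longrightarrow> norm (\<sigma> y) = 1"
  using bvd[THEN conjunct2, THEN conjunct2, THEN conjunct2, THEN conjunct2, THEN conjunct1] by blast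
lemma IBP: "test_fun \<Omega> \<phi> \<Longrightarrow> i \<in> Basis \<Longrightarrow>
   (LINT y:\<Omega>|lebesgue. f y * frechet_derivative \<phi> (at y) i) = - (LINT y:\<Omega>|\<mu>. \<phi> y * (\<sigma> y \<bullet> i))"
  using bvd[THEN conjunct2, THEN conjunct2, THEN conjunct2, THEN conjunct2, THEN conjunct2] by blast

lemma cz: "continuous_on UNIV (\<lambda>y. (1 / \<eta> x) *\<^sub>R (x - y))"
  by (intro continuous_intros)

lemma gcont: "continuous_on UNIV g \<Longrightarrow> continuous_on UNIV (\<lambda>y. g ((1 / \<eta> x) *\<^sub>R (x - y)))"
  using continuous_on_compose2[OF _ cz, of UNIV g] by simp

lemma cpd: "j \<in> Basis \<Longrightarrow> continuous_on UNIV (pd \<rho> j)" using smooth_cont[OF smooth_pd[OF rs]] by blast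
lemma crho: "continuous_on UNIV \<rho>" using smooth_cont[OF rs] .

lemma zero_out_rho: "y \<notin> cball x (\<eta> x) \<Longrightarrow> \<rho> ((1 / \<eta> x) *\<^sub>R (x - y)) = 0"
  using mollifier_zero[OF m] z_out[OF e_pos] by (meson less_imp_le)
lemma zero_out_pd: "y \<notin> cball x (\<eta> x) \<Longrightarrow> pd \<rho> j ((1 / \<eta> x) *\<^sub>R (x - y)) = 0"
  using rho_pd_zero[OF m] z_out[OF e_pos] by blast

lemma intL:
  assumes "continuous_on UNIV g" "\<And>y. y \<notin> cball x (\<eta> x) \<Longrightarrow> g y = 0"
  shows "set_integrable lebesgue \<Omega> (\<lambda>y. g y * f y)"
  by (rule int_Omega[OF assms(1) compact_cball Bsub assms(2) fB])

lemma intM: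
  fixes w :: "'a \<Rightarrow> 'b::euclidean_space"
  assumes "continuous_on UNIV g" "\<And>y. y \<notin> cball x (\<eta> x) \<Longrightarrow> g y = 0"
    "w \<in> borel_measurable borel" "\<And>y. y \<in> \<Omega> \<Longrightarrow> norm (w y) \<le> 1"
  shows "set_integrable \<mu> \<Omega> (\<lambda>y. g y *\<^sub>R w y)"
  by (rule mu_int[OF sets_mu assms(1) compact_cball Bsub assms(2) fin_mu assms(3,4) O])

lemma sig_i_m: "(\<lambda>y. \<sigma> y \<bullet> j) \<in> borel_measurable borel"
  using borel_measurable_inner[OF sig_m borel_measurable_const] by simp
lemma sig_i_n: "y \<in> \<Omega> \<Longrightarrow> j \<in> Basis \<Longrightarrow> norm (\<sigma> y \<bullet> j) \<le> 1"
  using Basis_le_norm[of j "\<sigma> y"] sig_n by simp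

lemma sint_cong: "(\<And>y. F y = G y) \<Longrightarrow> (LINT y:A|M. F y) = (LINT y:A|M. G y)"
  by simp

lemma per_i:
  assumes i: "i \<in> Basis"
  shows "TI \<Omega> f (pd (Kern \<rho> \<eta>) (i, 0)) x =
    C_coef \<rho> \<eta> x * (LINT y:\<Omega>|\<mu>. \<rho> ((1 / \<eta> x) *\<^sub>R (x - y)) * (\<sigma> y \<bullet> i))
    + C_coef \<rho> \<eta> x / \<eta> x * (LINT y:\<Omega>|\<mu>. \<rho> ((1 / \<eta> x) *\<^sub>R (x - y)) * ((y - x) \<bullet> \<sigma> y))
      * frechet_derivative \<eta> (at x) i"
proof -
  define e where "e = \<eta> x"
  define C where "C = C_coef \<rho> \<eta> x"
  define D\<eta> where "D\<eta> = frechet_derivative \<eta> (at x)"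
  define N where "N = real DIM('a)"
  define z where "z y = (1 / e) *\<^sub>R (x - y)" for y
  define gA where "gA y = pd \<rho> i (z y)" for y
  define gJ where "gJ j y = (z y \<bullet> j) * pd \<rho> j (z y)" for j y
  define gS where "gS y = (\<Sum>j\<in>Basis. gJ j y)" for y
  define gR where "gR y = \<rho> (z y)" for y
  have e: "e > 0" unfolding e_def using e_pos .
  note zdef = z_def[unfolded e_def]
  have cz': "continuous_on UNIV z" unfolding zdef using cz by simp
  have comp: "continuous_on UNIV g \<Longrightarrow> continuous_on UNIV (\<lambda>y. g (z y))" for g
    unfolding zdef using gcont by blast
  have cA: "continuous_on UNIV gA" unfolding gA_def using comp[OF cpd[OF i]] .
  have cJ: "j \<in> Basis \<Longrightarrow> continuous_on UNIV (gJ j)" for j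
    unfolding gJ_def by (intro continuous_intros cz' comp[OF cpd]) auto
  have cS: "continuous_on UNIV gS" unfolding gS_def by (intro continuous_on_sum cJ) 
  have cR: "continuous_on UNIV gR" unfolding gR_def using comp[OF crho] .
  have zA: "y \<notin> cball x (\<eta> x) \<Longrightarrow> gA y = 0" for y unfolding gA_def zdef using zero_out_pd by blast
  have zJ: "y \<notin> cball x (\<eta> x) \<Longrightarrow> gJ j y = 0" for j y unfolding gJ_def zdef using zero_out_pd by simp
  have zS: "y \<notin> cball x (\<eta> x) \<Longrightarrow> gS y = 0" for y unfolding gS_def using zJ by simp
  have zR: "y \<notin> cball x (\<eta> x) \<Longrightarrow> gR y = 0" for y unfolding gR_def zdef using zero_out_rho by blast
  have iA: "set_integrable lebesgue \<Omega> (\<lambda>y. gA y * f y)" by (rule intL[OF cA zA])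
  have iJ: "j \<in> Basis \<Longrightarrow> set_integrable lebesgue \<Omega> (\<lambda>y. gJ j y * f y)" for j by (rule intL[OF cJ zJ])
  have iS: "set_integrable lebesgue \<Omega> (\<lambda>y. gS y * f y)" by (rule intL[OF cS zS])
  have iR: "set_integrable lebesgue \<Omega> (\<lambda>y. gR y * f y)" by (rule intL[OF cR zR])
  define IA where "IA = (LINT y:\<Omega>|lebesgue. gA y * f y)"
  define IJ where "IJ j = (LINT y:\<Omega>|lebesgue. gJ j y * f y)" for j
  define IS where "IS = (LINT y:\<Omega>|lebesgue. gS y * f y)"
  define IR where "IR = (LINT y:\<Omega>|lebesgue. gR y * f y)"
  define A where "A = (LINT y:\<Omega>|\<mu>. \<rho> ((1 / \<eta> x) *\<^sub>R (x - y)) * (\<sigma> y \<bullet> i))"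
  define Bs where "Bs = (LINT y:\<Omega>|\<mu>. \<rho> ((1 / \<eta> x) *\<^sub>R (x - y)) * ((y - x) \<bullet> \<sigma> y))"
  have hD: "(\<eta> has_derivative D\<eta>) (at x)"
    unfolding D\<eta>_def using smooth_diff_at[OF es open_UNIV UNIV_I] frechet_derivative_works by blast
  have Ksm: "smooth_on (\<Omega> \<times> UNIV) (Kern \<rho> \<eta>)"
    using Kern_smooth[OF O rs es] eta_pos[OF O r] by blast
  have Kd: "Kern \<rho> \<eta> differentiable at (x, y)" for y
    by (rule smooth_diff_at[OF Ksm]) (use O x in \<open>auto simp: open_Times\<close>)
  have ptw: "pd (Kern \<rho> \<eta>) (i, 0) (x, y) = C / e * gA y - C * D\<eta> i / e * gS y - N * C * D\<eta> i / e * gR y" for y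
    unfolding C_def e_def gA_def gS_def gJ_def gR_def zdef N_def
    by (rule Kern_pd[OF hD e_pos rd Kd i])
  have LHS: "TI \<Omega> f (pd (Kern \<rho> \<eta>) (i, 0)) x = C / e * IA - C * D\<eta> i / e * IS - N * C * D\<eta> i / e * IR"
  proof -
    have "TI \<Omega> f (pd (Kern \<rho> \<eta>) (i, 0)) x
        = (LINT y:\<Omega>|lebesgue. (C / e * (gA y * f y) - C * D\<eta> i / e * (gS y * f y)) - N * C * D\<eta> i / e * (gR y * f y))"
      unfolding TI_def ptw by (rule sint_cong) (auto simp: algebra_simps)
    also have "\<dots> = C / e * IA - C * D\<eta> i / e * IS - N * C * D\<eta> i / e * IR"
    proof -
      have a: "set_integrable lebesgue \<Omega> (\<lambda>y. C / e * (gA y * f y))" using iA by (rule set_integrable_mult_right)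
      have b: "set_integrable lebesgue \<Omega> (\<lambda>y. C * D\<eta> i / e * (gS y * f y))" using iS by (rule set_integrable_mult_right)
      have c: "set_integrable lebesgue \<Omega> (\<lambda>y. N * C * D\<eta> i / e * (gR y * f y))" using iR by (rule set_integrable_mult_right)
      show ?thesis
        unfolding set_integral_diff(2)[OF set_integral_diff(1)[OF a b] c] set_integral_diff(2)[OF a b]
        unfolding IA_def IS_def IR_def by simp
    qed
    finally show ?thesis .
  qed
  have t1: "test_fun \<Omega> (\<lambda>y. \<rho> ((1 / \<eta> x) *\<^sub>R (x - y)))"
    by (rule test_funI[OF phi1_smooth[OF rs] _ Bsub]) (use rho_supp[OF m e_pos] in blast)
  have A_eq: "A = IA / e"
  proof -
    have "(LINT y:\<Omega>|lebesgue. f y * frechet_derivative (\<lambda>y. \<rho> ((1 / \<eta> x) *\<^sub>R (x - y))) (at y) i)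
        = (LINT y:\<Omega>|lebesgue. (- (1 / e)) * (gA y * f y))"
    proof (rule sint_cong)
      fix y
      have "frechet_derivative (\<lambda>y. \<rho> ((1 / \<eta> x) *\<^sub>R (x - y))) (at y) i = - (1 / e) * gA y"
        using phi1_pd[OF rd, where e="\<eta> x" and x=x and y=y and i=i] unfolding pd_def gA_def zdef e_def by simp
      then show "f y * frechet_derivative (\<lambda>y. \<rho> ((1 / \<eta> x) *\<^sub>R (x - y))) (at y) i = (- (1 / e)) * (gA y * f y)"
        by simp
    qed
    also have "\<dots> = - (1 / e) * IA" unfolding IA_def by (rule set_integral_mult_right)
    finally have "- (1 / e) * IA = - A" using IBP[OF t1 i] unfolding A_def by simp
    then show ?thesis by simp
  qed
  have IBP2: "(LINT y:\<Omega>|\<mu>. (\<rho> ((1 / \<eta> x) *\<^sub>R (x - y)) * ((y - x) \<bullet> j)) * (\<sigma> y \<bullet> j)) = - (IJ j + IR)"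
    if j: "j \<in> Basis" for j
  proof -
    have t2: "test_fun \<Omega> (\<lambda>y. \<rho> ((1 / \<eta> x) *\<^sub>R (x - y)) * ((y - x) \<bullet> j))"
      by (rule test_funI[OF phi2_smooth[OF rs] _ Bsub]) (use rho_supp[OF m e_pos] in force)
    have "(LINT y:\<Omega>|lebesgue. f y * frechet_derivative (\<lambda>y. \<rho> ((1 / \<eta> x) *\<^sub>R (x - y)) * ((y - x) \<bullet> j)) (at y) j)
        = (LINT y:\<Omega>|lebesgue. gJ j y * f y + gR y * f y)"
    proof (rule sint_cong)
      fix y
      have "frechet_derivative (\<lambda>y. \<rho> ((1 / \<eta> x) *\<^sub>R (x - y)) * ((y - x) \<bullet> j)) (at y) j = gJ j y + gR y"
        using phi2_pd[OF rd j, where e="\<eta> x" and x=x and y=y] e unfolding pd_def gJ_def gR_def zdef e_def by simp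
      then show "f y * frechet_derivative (\<lambda>y. \<rho> ((1 / \<eta> x) *\<^sub>R (x - y)) * ((y - x) \<bullet> j)) (at y) j = gJ j y * f y + gR y * f y"
        by (simp add: algebra_simps)
    qed
    also have "\<dots> = IJ j + IR" unfolding IJ_def IR_def using set_integral_add(2)[OF iJ[OF j] iR] .
    finally show ?thesis using IBP[OF t2 j] by simp
  qed
  have iM2: "set_integrable \<mu> \<Omega> (\<lambda>y. (\<rho> ((1 / \<eta> x) *\<^sub>R (x - y)) * ((y - x) \<bullet> j)) * (\<sigma> y \<bullet> j))"
    if j: "j \<in> Basis" for j
  proof -
    have c: "continuous_on UNIV (\<lambda>y. \<rho> ((1 / \<eta> x) *\<^sub>R (x - y)) * ((y - x) \<bullet> j))"
      by (intro continuous_intros gcont[OF crho])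
    have "set_integrable \<mu> \<Omega> (\<lambda>y. (\<rho> ((1 / \<eta> x) *\<^sub>R (x - y)) * ((y - x) \<bullet> j)) *\<^sub>R (\<sigma> y \<bullet> j))"
      by (rule intM[OF c _ sig_i_m]) (use zero_out_rho sig_i_n[OF _ j] in auto)
    then show ?thesis by simp
  qed
  have Bs_eq: "Bs = - IS - N * IR"
  proof -
    have "Bs = (LINT y:\<Omega>|\<mu>. (\<Sum>j\<in>Basis. (\<rho> ((1 / \<eta> x) *\<^sub>R (x - y)) * ((y - x) \<bullet> j)) * (\<sigma> y \<bullet> j)))"
      unfolding Bs_def
    proof (rule sint_cong)
      fix y
      show "\<rho> ((1 / \<eta> x) *\<^sub>R (x - y)) * ((y - x) \<bullet> \<sigma> y) = (\<Sum>j\<in>Basis. (\<rho> ((1 / \<eta> x) *\<^sub>R (x - y)) * ((y - x) \<bullet> j)) * (\<sigma> y \<bullet> j))"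
        by (simp add: euclidean_inner[of "y - x" "\<sigma> y"] sum_distrib_left mult.assoc)
    qed
    also have "\<dots> = (\<Sum>j\<in>Basis. - (IJ j + IR))"
    proof -
      define F where "F j y = (\<rho> ((1 / \<eta> x) *\<^sub>R (x - y)) * ((y - x) \<bullet> j)) * (\<sigma> y \<bullet> j)" for j y
      have "\<And>j. j \<in> Basis \<Longrightarrow> set_integrable \<mu> \<Omega> (F j)" unfolding F_def using iM2 by blast
      then have "(LINT y:\<Omega>|\<mu>. \<Sum>j\<in>Basis. F j y) = (\<Sum>j\<in>Basis. LINT y:\<Omega>|\<mu>. F j y)"
        using set_integral_sum_fin[of Basis \<mu> \<Omega> F] finite_Basis by blast
      also have "\<dots> = (\<Sum>j\<in>Basis. - (IJ j + IR))"
        by (rule sum.cong) (simp_all add: F_def IBP2)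
      finally show ?thesis unfolding F_def .
    qed
    also have "\<dots> = - (\<Sum>j\<in>Basis. IJ j) - N * IR" unfolding N_def by (simp add: sum_subtractf sum_negf)
    also have "(\<Sum>j\<in>Basis. IJ j) = IS"
    proof -
      have "IS = (LINT y:\<Omega>|lebesgue. (\<Sum>j\<in>Basis. gJ j y * f y))"
        unfolding IS_def gS_def by (simp add: sum_distrib_right)
      also have "\<dots> = (\<Sum>j\<in>Basis. IJ j)"
      proof -
        define F where "F j y = gJ j y * f y" for j y
        have "\<And>j. j \<in> Basis \<Longrightarrow> set_integrable lebesgue \<Omega> (F j)" unfolding F_def using iJ by blast
        then have "(LINT y:\<Omega>|lebesgue. \<Sum>j\<in>Basis. F j y) = (\<Sum>j\<in>Basis. LINT y:\<Omega>|lebesgue. F j y)"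
          using set_integral_sum_fin[of Basis lebesgue \<Omega> F] finite_Basis by blast
        then show ?thesis unfolding F_def IJ_def .
      qed
      finally show ?thesis by simp
    qed
    finally show ?thesis .
  qed
  show ?thesis
    unfolding A_def[symmetric] Bs_def[symmetric]
    unfolding LHS C_def[symmetric] D\<eta>_def[symmetric] e_def[symmetric]
    unfolding A_eq Bs_eq using e by (simp add: field_simps)
qed

end



context
  fixes \<Omega> :: "'a::euclidean_space set" and \<rho> \<eta> f :: "'a \<Rightarrow> real"
    and \<mu> :: "'a measure" and \<sigma> :: "'a \<Rightarrow> 'a" and x :: 'a
  assumes O: "open \<Omega>" and m: "mollifier \<rho>" and r: "reg_dist \<Omega> \<eta>"
    and bv: "BV_loc_with_deriv \<Omega> f \<mu> \<sigma>" and x: "x \<in> \<Omega>"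
begin

lemma deriv_formula:
  "(T_op \<Omega> \<rho> \<eta> f has_derivative (\<lambda>h.
         (C_coef \<rho> \<eta> x *\<^sub>R (LINT y:\<Omega>|\<mu>. \<rho> ((1 / \<eta> x) *\<^sub>R (x - y)) *\<^sub>R \<sigma> y)
          + (C_coef \<rho> \<eta> x / \<eta> x
             * (LINT y:\<Omega>|\<mu>. \<rho> ((1 / \<eta> x) *\<^sub>R (x - y)) * ((y - x) \<bullet> \<sigma> y))) *\<^sub>R gradient \<eta> x)
         \<bullet> h)) (at x)"
proof -
  note ctx = O m r bv x
  define C where "C = C_coef \<rho> \<eta> x"
  define e where "e = \<eta> x"
  define D\<eta> where "D\<eta> = frechet_derivative \<eta> (at x)"
  define A where "A i = (LINT y:\<Omega>|\<mu>. \<rho> ((1 / \<eta> x) *\<^sub>R (x - y)) * (\<sigma> y \<bullet> i))" for i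
  define Bs where "Bs = (LINT y:\<Omega>|\<mu>. \<rho> ((1 / \<eta> x) *\<^sub>R (x - y)) * ((y - x) \<bullet> \<sigma> y))"
  define V where "V = (LINT y:\<Omega>|\<mu>. \<rho> ((1 / \<eta> x) *\<^sub>R (x - y)) *\<^sub>R \<sigma> y)"
  have floc': "\<forall>K. compact K \<and> K \<subseteq> \<Omega> \<longrightarrow> set_integrable lebesgue K f" by (rule floc[OF ctx])
  have d: "(TI \<Omega> f (Kern \<rho> \<eta>) has_derivative (\<lambda>h. \<Sum>i\<in>Basis. (h \<bullet> i) * TI \<Omega> f (pd (Kern \<rho> \<eta>) (i, 0)) x)) (at x)"
    by (rule deriv_TI[OF O Kern_good[OF O m r] x floc'])
  have zr: "\<And>y. y \<notin> cball x (\<eta> x) \<Longrightarrow> \<rho> ((1 / \<eta> x) *\<^sub>R (x - y)) = 0" by (rule zero_out_rho[OF ctx])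
  have gc: "continuous_on UNIV (\<lambda>y. \<rho> ((1 / \<eta> x) *\<^sub>R (x - y)))" by (rule gcont[OF ctx crho[OF ctx]])
  have iV: "set_integrable \<mu> \<Omega> (\<lambda>y. \<rho> ((1 / \<eta> x) *\<^sub>R (x - y)) *\<^sub>R \<sigma> y)"
  proof (rule intM[OF ctx gc zr sig_m[OF ctx]])
    fix y assume y: "y \<in> \<Omega>"
    have "norm (\<sigma> y) = 1" using sig_n[OF ctx y] .
    then show "norm (\<sigma> y) \<le> 1" by simp
  qed
  have iA: "set_integrable \<mu> \<Omega> (\<lambda>y. \<rho> ((1 / \<eta> x) *\<^sub>R (x - y)) * (\<sigma> y \<bullet> i))" if i: "i \<in> Basis" for i
    using intM[OF ctx gc zr sig_i_m[OF ctx], of i] sig_i_n[OF ctx _ i] by simp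
  have Vh: "V \<bullet> h = (\<Sum>i\<in>Basis. (h \<bullet> i) * A i)" for h
  proof -
    have "V \<bullet> h = (LINT y:\<Omega>|\<mu>. \<rho> ((1 / \<eta> x) *\<^sub>R (x - y)) * (\<sigma> y \<bullet> h))"
      using iV unfolding V_def set_lebesgue_integral_def set_integrable_def
      by (simp add: integral_inner_left[symmetric] mult.assoc)
    also have "\<dots> = (LINT y:\<Omega>|\<mu>. \<Sum>i\<in>Basis. (h \<bullet> i) * (\<rho> ((1 / \<eta> x) *\<^sub>R (x - y)) * (\<sigma> y \<bullet> i)))"
    proof (rule sint_cong[OF ctx])
      fix y
      show "\<rho> ((1 / \<eta> x) *\<^sub>R (x - y)) * (\<sigma> y \<bullet> h) = (\<Sum>i\<in>Basis. (h \<bullet> i) * (\<rho> ((1 / \<eta> x) *\<^sub>R (x - y)) * (\<sigma> y \<bullet> i)))"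
      proof -
        have "\<sigma> y \<bullet> h = (\<Sum>i\<in>Basis. (h \<bullet> i) * (\<sigma> y \<bullet> i))"
          by (simp add: euclidean_inner[of "\<sigma> y" h] ac_simps)
        then show ?thesis by (simp add: sum_distrib_left ac_simps)
      qed
    qed
    also have "\<dots> = (\<Sum>i\<in>Basis. (h \<bullet> i) * A i)"
    proof -
      define F where "F i y = (h \<bullet> i) * (\<rho> ((1 / \<eta> x) *\<^sub>R (x - y)) * (\<sigma> y \<bullet> i))" for i y
      have "\<And>i. i \<in> Basis \<Longrightarrow> set_integrable \<mu> \<Omega> (F i)" unfolding F_def by (rule set_integrable_mult_right[OF iA])
      then have "(LINT y:\<Omega>|\<mu>. \<Sum>i\<in>Basis. F i y) = (\<Sum>i\<in>Basis. LINT y:\<Omega>|\<mu>. F i y)"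
        using set_integral_sum_fin[of Basis \<mu> \<Omega> F] finite_Basis by blast
      then show ?thesis unfolding F_def A_def by simp
    qed
    finally show ?thesis .
  qed
  have Gh: "gradient \<eta> x \<bullet> h = (\<Sum>i\<in>Basis. (h \<bullet> i) * D\<eta> i)" for h
  proof -
    have "gradient \<eta> x \<bullet> h = (\<Sum>i\<in>Basis. D\<eta> i * (i \<bullet> h))"
      unfolding gradient_def D\<eta>_def by (simp only: inner_sum_left inner_scaleR_left)
    also have "\<dots> = (\<Sum>i\<in>Basis. (h \<bullet> i) * D\<eta> i)"
      by (rule sum.cong) (auto simp: inner_commute mult.commute)
    finally show ?thesis .
  qed
  have eq: "(\<Sum>i\<in>Basis. (h \<bullet> i) * TI \<Omega> f (pd (Kern \<rho> \<eta>) (i, 0)) x)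
      = (C *\<^sub>R V + (C / e * Bs) *\<^sub>R gradient \<eta> x) \<bullet> h" for h
  proof -
    have "(\<Sum>i\<in>Basis. (h \<bullet> i) * TI \<Omega> f (pd (Kern \<rho> \<eta>) (i, 0)) x)
        = (\<Sum>i\<in>Basis. (h \<bullet> i) * (C * A i + C / e * Bs * D\<eta> i))"
      by (rule sum.cong) (simp_all add: per_i[OF ctx] C_def A_def Bs_def e_def D\<eta>_def)
    also have "\<dots> = C * (\<Sum>i\<in>Basis. (h \<bullet> i) * A i) + C / e * Bs * (\<Sum>i\<in>Basis. (h \<bullet> i) * D\<eta> i)"
      by (simp add: sum.distrib sum_distrib_left algebra_simps)
    also have "\<dots> = (C *\<^sub>R V + (C / e * Bs) *\<^sub>R gradient \<eta> x) \<bullet> h"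
      by (simp add: inner_add_left Vh Gh)
    finally show ?thesis .
  qed
  have "(TI \<Omega> f (Kern \<rho> \<eta>) has_derivative (\<lambda>h. (C *\<^sub>R V + (C / e * Bs) *\<^sub>R gradient \<eta> x) \<bullet> h)) (at x)"
    using d unfolding eq .
  then show ?thesis unfolding T_op_TI C_def V_def e_def Bs_def .
qed

end

theorem proposition4p1:
  fixes \<Omega> :: "'a::euclidean_space set"
    and \<rho> \<eta> f :: "'a \<Rightarrow> real"
    and \<mu> :: "'a measure" and \<sigma> :: "'a \<Rightarrow> 'a"
  assumes "open \<Omega>" and "bounded \<Omega>"
    and "mollifier \<rho>"
    and "reg_dist \<Omega> \<eta>"
    and "BV_loc_with_deriv \<Omega> f \<mu> \<sigma>"
  shows "smooth_on \<Omega> (T_op \<Omega> \<rho> \<eta> f)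
    \<and> (\<forall>x\<in>\<Omega>. (T_op \<Omega> \<rho> \<eta> f has_derivative (\<lambda>h.
         (C_coef \<rho> \<eta> x *\<^sub>R (LINT y:\<Omega>|\<mu>. \<rho> ((1 / \<eta> x) *\<^sub>R (x - y)) *\<^sub>R \<sigma> y)
          + (C_coef \<rho> \<eta> x / \<eta> x
             * (LINT y:\<Omega>|\<mu>. \<rho> ((1 / \<eta> x) *\<^sub>R (x - y)) * ((y - x) \<bullet> \<sigma> y))) *\<^sub>R gradient \<eta> x)
         \<bullet> h)) (at x))"
proof
  have floc': "\<forall>K. compact K \<and> K \<subseteq> \<Omega> \<longrightarrow> set_integrable lebesgue K f"
    using assms(5) unfolding BV_loc_with_deriv_def by (rule conjunct1)
  show "smooth_on \<Omega> (T_op \<Omega> \<rho> \<eta> f)" by (rule T_smooth[OF assms(1,3,4) floc'])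
  show "\<forall>x\<in>\<Omega>. (T_op \<Omega> \<rho> \<eta> f has_derivative (\<lambda>h.
         (C_coef \<rho> \<eta> x *\<^sub>R (LINT y:\<Omega>|\<mu>. \<rho> ((1 / \<eta> x) *\<^sub>R (x - y)) *\<^sub>R \<sigma> y)
          + (C_coef \<rho> \<eta> x / \<eta> x
             * (LINT y:\<Omega>|\<mu>. \<rho> ((1 / \<eta> x) *\<^sub>R (x - y)) * ((y - x) \<bullet> \<sigma> y))) *\<^sub>R gradient \<eta> x)
         \<bullet> h)) (at x)"
    using deriv_formula[OF assms(1,3,4,5)] by blast
qed


end
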